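(* Let $X$ be a compact metric space of negative type. Then $$|X|_+ = \sup\{|Y| : Y\subseteq X \text{ closed and positively weighted}\},$$ and this supremum is attained when $Y$ is the support of the diversity-maximizing measure of $X$.
   Context: For a compact metric space $(Y,d)$: $Z(x,y)=e^{-d(x,y)}$; $\mathscr{M}(Y)$ = finite signed Borel measures, $\mathscr{P}(Y)$ = Borel probability measures; $\langle\mu,\nu\rangle_{\mathscr{W}}=\int\int Z(x,y)\,\mu(dx)\nu(dy)$. $Y$ is of negative type if $(Y,\sqrt d)$ embeds isometrically into a Hilbert space (closed subsets of a negative-type space are of negative type); then $\langle\cdot,\cdot\rangle_{\mathscr W}$ is an inner product on $\mathscr{M}(Y)$ with norm $\|\cdot\|_{\mathscr W}$. Maximum diversity: $|Y|_+=\sup_{\mu\in\mathscr{P}(Y)}1/\langle\mu,\mu\rangle_{\mathscr W}$, attained by a unique diversity-maximizing measure when $Y$ is of negative type. Magnitude: $|Y|=\sup\{1/\|\mu\|_{\mathscr W}^2:\mu\in\mathscr M(Y),\ \mu(Y)=1\}$. $Y$ is positively weighted if this supremum is attained at some probability measure $\mu\in\mathscr{P}(Y)$ (equivalently, there is a nonnegative measure $w$ on $Y$ with $\int_Y e^{-d(x,y)}w(dy)=1$ for all $x\in Y$). *)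

theory Defs
  imports "HOL-Analysis.Analysis"
begin

text \<open>Measures on a subset Y of the ambient metric space are represented as
finite Borel measures on the ambient type that give no mass to the complement
of Y. A finite signed Borel measure is represented as a pair (positive part,
negative part) of such measures, i.e. as their difference.\<close>

definition negative_type :: "'h::{real_inner,complete_space} itself \<Rightarrow> 'a::metric_space set \<Rightarrow> bool" where
  "negative_type _ X \<longleftrightarrow>
     (\<exists>f :: 'a \<Rightarrow> 'h. \<forall>x\<in>X. \<forall>y\<in>X. dist (f x) (f y) = sqrt (dist x y))"

definition fin_measures_on :: "'a::metric_space set \<Rightarrow> 'a measure set" where
  "fin_measures_on Y = {\<mu>. sets \<mu> = sets borel \<and> finite_measure \<mu> \<and> emeasure \<mu> (UNIV - Y) = 0}"

definition prob_measures_on :: "'a::metric_space set \<Rightarrow> 'a measure set" where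
  "prob_measures_on Y = {\<mu> \<in> fin_measures_on Y. emeasure \<mu> UNIV = 1}"

definition Zpair :: "'a::metric_space measure \<Rightarrow> 'a measure \<Rightarrow> real" where
  "Zpair \<mu> \<nu> = (\<integral>x. (\<integral>y. exp (- dist x y) \<partial>\<nu>) \<partial>\<mu>)"

definition Winner :: "'a::metric_space measure \<times> 'a measure \<Rightarrow> 'a measure \<times> 'a measure \<Rightarrow> real" where
  "Winner m n = Zpair (fst m) (fst n) - Zpair (fst m) (snd n) - Zpair (snd m) (fst n) + Zpair (snd m) (snd n)"

definition total_mass :: "'a::metric_space measure \<times> 'a measure \<Rightarrow> real" where
  "total_mass m = measure (fst m) UNIV - measure (snd m) UNIV"

definition magnitude :: "'a::metric_space set \<Rightarrow> ereal" where
  "magnitude Y = Sup {ereal (1 / Winner m m) | m.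
      fst m \<in> fin_measures_on Y \<and> snd m \<in> fin_measures_on Y \<and> total_mass m = 1}"

definition max_diversity :: "'a::metric_space set \<Rightarrow> ereal" where
  "max_diversity Y = Sup {ereal (1 / Zpair \<mu> \<mu>) | \<mu>. \<mu> \<in> prob_measures_on Y}"

definition positively_weighted :: "'a::metric_space set \<Rightarrow> bool" where
  "positively_weighted Y \<longleftrightarrow> (\<exists>\<mu> \<in> prob_measures_on Y. magnitude Y = ereal (1 / Zpair \<mu> \<mu>))"

definition diversity_maximizing :: "'a::metric_space set \<Rightarrow> 'a measure \<Rightarrow> bool" where
  "diversity_maximizing X \<mu> \<longleftrightarrow> \<mu> \<in> prob_measures_on X \<and> max_diversity X = ereal (1 / Zpair \<mu> \<mu>)"

definition support :: "'a::metric_space measure \<Rightarrow> 'a set" where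
  "support \<mu> = {x. \<forall>U. open U \<and> x \<in> U \<longrightarrow> emeasure \<mu> U > 0}"

end

theory Submission
  imports Defs "HOL-Probability.Giry_Monad"
begin

definition msum :: "'i set \<Rightarrow> ('i \<Rightarrow> real) \<Rightarrow> ('i \<Rightarrow> 'a::metric_space measure) \<Rightarrow> 'a measure" where
  "msum I r M = measure_of UNIV (sets borel) (\<lambda>A. \<Sum>i\<in>I. ennreal (r i) * emeasure (M i) A)"

lemma sets_msum[simp, measurable_cong]: "sets (msum I r M) = sets borel"
  unfolding msum_def by (metis sets.sets_measure_of_eq space_borel)

lemma space_msum[simp]: "space (msum I r M) = UNIV"
  using sets_eq_imp_space_eq[OF sets_msum] by simp

lemma emeasure_msum:
  fixes M :: "'i \<Rightarrow> 'a::metric_space measure"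
  assumes "\<And>i. i \<in> I \<Longrightarrow> sets (M i) = sets borel" "A \<in> sets borel"
  shows "emeasure (msum I r M) A = (\<Sum>i\<in>I. ennreal (r i) * emeasure (M i) A)"
  unfolding msum_def
proof (rule emeasure_measure_of_sigma)
  show "sigma_algebra UNIV (sets borel)"
    by (metis sets.sigma_algebra_axioms space_borel)
  show "positive (sets borel) (\<lambda>A. \<Sum>i\<in>I. ennreal (r i) * emeasure (M i) A)"
    by (simp add: positive_def)
  show "countably_additive (sets borel) (\<lambda>A. \<Sum>i\<in>I. ennreal (r i) * emeasure (M i) A)"
    unfolding countably_additive_def
  proof (intro allI impI)
    fix A :: "nat \<Rightarrow> 'a set"
    assume A: "range A \<subseteq> sets borel" "disjoint_family A" "\<Union> (range A) \<in> sets borel"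
    have "(\<Sum>n. \<Sum>i\<in>I. ennreal (r i) * emeasure (M i) (A n)) = (\<Sum>i\<in>I. \<Sum>n. ennreal (r i) * emeasure (M i) (A n))"
      by (rule suminf_sum) (rule summableI)
    also have "\<dots> = (\<Sum>i\<in>I. ennreal (r i) * emeasure (M i) (\<Union> (range A)))"
    proof (rule sum.cong[OF refl])
      fix i assume "i \<in> I"
      then have "range A \<subseteq> sets (M i)" using A assms(1) by auto
      then show "(\<Sum>n. ennreal (r i) * emeasure (M i) (A n)) = ennreal (r i) * emeasure (M i) (\<Union> (range A))"
        using suminf_emeasure[of A "M i"] A by simp
    qed
    finally show "(\<Sum>n. \<Sum>i\<in>I. ennreal (r i) * emeasure (M i) (A n)) = (\<Sum>i\<in>I. ennreal (r i) * emeasure (M i) (\<Union> (range A)))" .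
  qed
qed (use assms in auto)

lemma meas_borelI: "sets M = sets borel \<Longrightarrow> f \<in> borel_measurable borel \<Longrightarrow> f \<in> borel_measurable M"
  using measurable_cong_sets[of M borel borel borel] by simp

lemma nn_integral_msum:
  fixes M :: "'i \<Rightarrow> 'a::metric_space measure"
  assumes M: "\<And>i. i \<in> I \<Longrightarrow> sets (M i) = sets borel" and f: "f \<in> borel_measurable borel"
  shows "(\<integral>\<^sup>+x. f x \<partial>msum I r M) = (\<Sum>i\<in>I. ennreal (r i) * (\<integral>\<^sup>+x. f x \<partial>M i))"
  using f
proof (induction rule: borel_measurable_induct)
  case (cong f g)
  have "(\<integral>\<^sup>+x. f x \<partial>msum I r M) = (\<integral>\<^sup>+x. g x \<partial>msum I r M)"
    by (rule nn_integral_cong) (use cong in auto)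
  moreover have "(\<integral>\<^sup>+x. f x \<partial>M i) = (\<integral>\<^sup>+x. g x \<partial>M i)" if "i \<in> I" for i
    by (rule nn_integral_cong) (use cong sets_eq_imp_space_eq[OF M[OF that]] in auto)
  ultimately show ?case using cong by (simp cong: sum.cong)
next
  case (set A)
  have i: "(\<integral>\<^sup>+x. indicator A x \<partial>M i) = emeasure (M i) A" if "i \<in> I" for i
    using set M[OF that] by (simp add: nn_integral_indicator)
  have m: "(\<integral>\<^sup>+x. indicator A x \<partial>msum I r M) = emeasure (msum I r M) A"
    using set by (simp add: nn_integral_indicator)
  have e: "emeasure (msum I r M) A = (\<Sum>i\<in>I. ennreal (r i) * emeasure (M i) A)"
    by (rule emeasure_msum[OF M]) (use set in auto)
  show ?case unfolding m e by (rule sum.cong[OF refl]) (simp only: i)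
next
  case (mult u c)
  have mi: "(\<integral>\<^sup>+x. c * u x \<partial>M i) = c * (\<integral>\<^sup>+x. u x \<partial>M i)" if "i \<in> I" for i
    using mult(2) M[OF that] by (intro nn_integral_cmult) (simp add: meas_borelI)
  have "(\<integral>\<^sup>+x. c * u x \<partial>msum I r M) = c * (\<integral>\<^sup>+x. u x \<partial>msum I r M)"
    using mult(2) by (intro nn_integral_cmult) (simp add: meas_borelI)
  also have "\<dots> = c * (\<Sum>i\<in>I. ennreal (r i) * (\<integral>\<^sup>+x. u x \<partial>M i))"
    by (simp only: mult(4))
  also have "\<dots> = (\<Sum>i\<in>I. ennreal (r i) * (c * (\<integral>\<^sup>+x. u x \<partial>M i)))"
    by (simp only: sum_distrib_left mult.left_commute)
  also have "\<dots> = (\<Sum>i\<in>I. ennreal (r i) * (\<integral>\<^sup>+x. c * u x \<partial>M i))"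
    by (rule sum.cong[OF refl]) (simp only: mi)
  finally show ?case .
next
  case (add u v)
  have ai: "(\<integral>\<^sup>+x. v x + u x \<partial>M i) = (\<integral>\<^sup>+x. v x \<partial>M i) + (\<integral>\<^sup>+x. u x \<partial>M i)" if "i \<in> I" for i
    using add(1,3) M[OF that] by (intro nn_integral_add) (auto simp add: meas_borelI)
  have "(\<integral>\<^sup>+x. v x + u x \<partial>msum I r M) = (\<integral>\<^sup>+x. v x \<partial>msum I r M) + (\<integral>\<^sup>+x. u x \<partial>msum I r M)"
    using add(1,3) by (intro nn_integral_add) (auto simp add: meas_borelI)
  also have "\<dots> = (\<Sum>i\<in>I. ennreal (r i) * (\<integral>\<^sup>+x. v x \<partial>M i)) + (\<Sum>i\<in>I. ennreal (r i) * (\<integral>\<^sup>+x. u x \<partial>M i))"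
    by (simp only: add(6) add(7))
  also have "\<dots> = (\<Sum>i\<in>I. ennreal (r i) * ((\<integral>\<^sup>+x. v x \<partial>M i) + (\<integral>\<^sup>+x. u x \<partial>M i)))"
    by (simp only: sum.distrib[symmetric] distrib_left)
  also have "\<dots> = (\<Sum>i\<in>I. ennreal (r i) * (\<integral>\<^sup>+x. v x + u x \<partial>M i))"
    by (rule sum.cong[OF refl]) (simp only: ai)
  finally show ?case .
next
  case (seq U)
  have si: "(\<integral>\<^sup>+x. (SUP j. U j) x \<partial>M i) = (SUP j. \<integral>\<^sup>+x. U j x \<partial>M i)" if "i \<in> I" for i
    unfolding SUP_apply using seq(1,3) M[OF that]
    by (intro nn_integral_monotone_convergence_SUP) (auto simp add: meas_borelI)
  have inc: "incseq (\<lambda>j. ennreal (r i) * (\<integral>\<^sup>+x. U j x \<partial>M i))" for i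
    using seq(3) unfolding incseq_def by (auto intro!: mult_left_mono nn_integral_mono simp: le_fun_def)
  have "(\<integral>\<^sup>+x. (SUP j. U j) x \<partial>msum I r M) = (SUP j. \<integral>\<^sup>+x. U j x \<partial>msum I r M)"
    unfolding SUP_apply using seq(1,3)
    by (intro nn_integral_monotone_convergence_SUP) (auto simp add: meas_borelI)
  also have "\<dots> = (SUP j. \<Sum>i\<in>I. ennreal (r i) * (\<integral>\<^sup>+x. U j x \<partial>M i))"
    by (simp only: seq(5))
  also have "\<dots> = (\<Sum>i\<in>I. SUP j. ennreal (r i) * (\<integral>\<^sup>+x. U j x \<partial>M i))"
    by (rule ennreal_SUP_sum) (rule inc)
  also have "\<dots> = (\<Sum>i\<in>I. ennreal (r i) * (\<integral>\<^sup>+x. (SUP j. U j) x \<partial>M i))"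
    by (rule sum.cong[OF refl]) (simp only: si SUP_mult_left_ennreal)
  finally show ?case .
qed


definition KZ :: "'a::metric_space measure \<Rightarrow> 'a \<Rightarrow> real" where
  "KZ \<nu> x = (\<integral>y. exp (- dist x y) \<partial>\<nu>)"

lemma Zpair_KZ: "Zpair \<mu> \<nu> = (\<integral>x. KZ \<nu> x \<partial>\<mu>)"
  unfolding Zpair_def KZ_def ..

lemma exp_lip:
  fixes a b :: real assumes "0 \<le> a" "0 \<le> b"
  shows "\<bar>exp (-a) - exp (-b)\<bar> \<le> \<bar>a - b\<bar>"
proof -
  have *: "exp (-a) - exp (-b) \<le> b - a" if "a \<le> b" "0 \<le> a" for a b :: real
  proof -
    have e: "exp (-a) * exp (-(b-a)) = exp (-b)" by (simp add: exp_add[symmetric])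
    have "1 - exp (-(b-a)) \<le> b - a" using exp_ge_add_one_self[of "-(b-a)"] by linarith
    moreover have "0 \<le> 1 - exp (-(b-a))" using that by simp
    moreover have "exp (-a) \<le> 1" "0 \<le> exp (-a)" using that by auto
    ultimately have "exp (-a) * (1 - exp (-(b-a))) \<le> 1 * (b - a)"
      by (intro mult_mono) auto
    then show ?thesis using e by (simp add: algebra_simps)
  qed
  have **: "0 \<le> exp (-a) - exp (-b)" if "a \<le> b" for a b :: real using that by simp
  show ?thesis
  proof (cases "a \<le> b")
    case True then show ?thesis using *[of a b] **[of a b] assms by auto
  next
    case False then show ?thesis using *[of b a] **[of b a] assms by auto
  qed
qed

lemma dist_diff_le: "\<bar>dist x y - dist x' y\<bar> \<le> dist x x'"
  using dist_triangle[of x y x'] dist_triangle[of x' y x] dist_commute[of x' x] by linarith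

lemma K_lip: "\<bar>exp (- dist x y) - exp (- dist x' y')\<bar> \<le> dist x x' + dist y y'"
proof -
  have "\<bar>exp (- dist x y) - exp (- dist x' y')\<bar> \<le> \<bar>dist x y - dist x' y'\<bar>"
    by (rule exp_lip) auto
  also have "\<dots> \<le> dist x x' + dist y y'"
    using dist_triangle[of x y y'] dist_triangle[of x y' x'] dist_commute[of x' x]
      dist_triangle[of x' y' y] dist_triangle[of x' y x] dist_commute[of y' y]
    by linarith
  finally show ?thesis .
qed

lemma K_meas[measurable]: "(\<lambda>y. exp (- dist x y)) \<in> borel_measurable borel"
  by (intro borel_measurable_continuous_onI continuous_intros)

lemma K_meas2[measurable]: "(\<lambda>y. exp (- dist y x)) \<in> borel_measurable borel"
  by (intro borel_measurable_continuous_onI continuous_intros)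

lemma integrable_bdd:
  fixes g :: "'a::metric_space \<Rightarrow> real"
  assumes "finite_measure \<nu>" "sets \<nu> = sets borel" "g \<in> borel_measurable borel" "\<And>x. \<bar>g x\<bar> \<le> B"
  shows "integrable \<nu> g"
  by (rule finite_measure.integrable_const_bound[OF assms(1), where B=B])
     (use assms in \<open>auto simp: meas_borelI\<close>)

lemma integral_diff_bound:
  fixes f g :: "'a \<Rightarrow> real"
  assumes M: "finite_measure M" and f: "integrable M f" and g: "integrable M g"
    and B: "AE x in M. \<bar>f x - g x\<bar> \<le> B"
  shows "\<bar>integral\<^sup>L M f - integral\<^sup>L M g\<bar> \<le> B * measure M (space M)"
proof -
  have "integral\<^sup>L M f - integral\<^sup>L M g = (\<integral>x. f x - g x \<partial>M)"
    using f g by simp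
  also have "\<bar>\<dots>\<bar> \<le> (\<integral>x. \<bar>f x - g x\<bar> \<partial>M)"
    by (rule integral_abs_bound)
  also have "\<dots> \<le> (\<integral>x. B \<partial>M)"
    by (rule integral_mono_AE) (use f g B finite_measure.integrable_const[OF M] in auto)
  also have "\<dots> = B * measure M (space M)" by simp
  finally show ?thesis .
qed

lemma fin_measuresD:
  assumes "\<mu> \<in> fin_measures_on Y"
  shows "sets \<mu> = sets borel" "finite_measure \<mu>" "emeasure \<mu> (UNIV - Y) = 0" "space \<mu> = UNIV"
  using assms sets_eq_imp_space_eq[of \<mu> borel] unfolding fin_measures_on_def by auto

lemma fin_measures_AE:
  assumes "\<mu> \<in> fin_measures_on Y" "closed Y"
  shows "AE x in \<mu>. x \<in> Y"
proof (rule AE_I'[of "UNIV - Y"])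
  show "UNIV - Y \<in> null_sets \<mu>"
    using fin_measuresD[OF assms(1)] assms(2) by (auto simp: null_sets_def)
qed auto

context
  fixes \<nu> :: "'a::metric_space measure"
  assumes fin: "finite_measure \<nu>" and sb: "sets \<nu> = sets borel"
begin

lemma sp: "space \<nu> = UNIV"
  using sets_eq_imp_space_eq[OF sb] by simp

lemma K_int: "integrable \<nu> (\<lambda>y. exp (- dist x y))"
  by (rule integrable_bdd[OF fin sb, where B=1]) auto

lemma K_int2: "integrable \<nu> (\<lambda>y. exp (- dist y x))"
  by (rule integrable_bdd[OF fin sb, where B=1]) auto

lemma KZ_nonneg: "0 \<le> KZ \<nu> x"
  unfolding KZ_def by (rule integral_nonneg_AE) auto

lemma KZ_le: "KZ \<nu> x \<le> measure \<nu> UNIV"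
proof -
  have "KZ \<nu> x \<le> (\<integral>y. 1 \<partial>\<nu>)"
    unfolding KZ_def
    by (rule integral_mono_AE) (use K_int finite_measure.integrable_const[OF fin] in auto)
  then show ?thesis by (simp add: sp)
qed

lemma KZ_lip: "\<bar>KZ \<nu> x - KZ \<nu> x'\<bar> \<le> dist x x' * measure \<nu> UNIV"
proof -
  have "\<bar>KZ \<nu> x - KZ \<nu> x'\<bar> \<le> dist x x' * measure \<nu> (space \<nu>)"
    unfolding KZ_def
  proof (rule integral_diff_bound[OF fin K_int K_int])
    show "AE y in \<nu>. \<bar>exp (- dist x y) - exp (- dist x' y)\<bar> \<le> dist x x'"
    proof (rule AE_I2)
      fix y show "\<bar>exp (- dist x y) - exp (- dist x' y)\<bar> \<le> dist x x'"
        using K_lip[of x y x' y] by simp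
    qed
  qed
  then show ?thesis by (simp add: sp)
qed

lemma KZ_cont: "continuous_on UNIV (KZ \<nu>)"
proof (rule lipschitz_on_continuous_on)
  show "(measure \<nu> UNIV)-lipschitz_on UNIV (KZ \<nu>)"
    by (rule lipschitz_onI) (use KZ_lip in \<open>auto simp: dist_real_def mult.commute\<close>)
qed

lemma KZ_meas[measurable]: "KZ \<nu> \<in> borel_measurable borel"
  by (rule borel_measurable_continuous_onI[OF KZ_cont])

lemma KZ_int:
  assumes "finite_measure \<mu>" "sets \<mu> = sets borel"
  shows "integrable \<mu> (KZ \<nu>)"
  by (rule integrable_bdd[OF assms, where B="measure \<nu> UNIV"])
     (use KZ_nonneg KZ_le in auto)

end

lemma Zpair_nonneg:
  assumes "\<alpha> \<in> fin_measures_on Y" "\<beta> \<in> fin_measures_on Y"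
  shows "0 \<le> Zpair \<alpha> \<beta>"
  unfolding Zpair_KZ
  by (rule integral_nonneg_AE) (use KZ_nonneg fin_measuresD[OF assms(2)] in auto)

lemma Zpair_lower:
  assumes a: "\<alpha> \<in> fin_measures_on X" and b: "\<beta> \<in> fin_measures_on X" and X: "closed X"
    and D: "\<And>x y. x \<in> X \<Longrightarrow> y \<in> X \<Longrightarrow> dist x y \<le> D"
  shows "exp (-D) * measure \<alpha> UNIV * measure \<beta> UNIV \<le> Zpair \<alpha> \<beta>"
proof -
  note fa = fin_measuresD[OF a] and fb = fin_measuresD[OF b]
  have k: "exp (-D) * measure \<beta> UNIV \<le> KZ \<beta> x" if "x \<in> X" for x
  proof -
    have "(\<integral>y. exp (-D) \<partial>\<beta>) \<le> KZ \<beta> x"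
      unfolding KZ_def
    proof (rule integral_mono_AE)
      show "integrable \<beta> (\<lambda>y. exp (- D))" using finite_measure.integrable_const[OF fb(2)] .
      show "integrable \<beta> (\<lambda>y. exp (- dist x y))" using K_int[OF fb(2,1)] .
      show "AE y in \<beta>. exp (- D) \<le> exp (- dist x y)"
        using fin_measures_AE[OF b X] by eventually_elim (use D that in auto)
    qed
    then show ?thesis using fb by (simp add: mult.commute)
  qed
  have "(\<integral>x. exp (-D) * measure \<beta> UNIV \<partial>\<alpha>) \<le> Zpair \<alpha> \<beta>"
    unfolding Zpair_KZ
  proof (rule integral_mono_AE)
    show "integrable \<alpha> (\<lambda>x. exp (- D) * measure \<beta> UNIV)" using finite_measure.integrable_const[OF fa(2)] .
    show "integrable \<alpha> (KZ \<beta>)" using KZ_int[OF fb(2,1) fa(2,1)] .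
    show "AE x in \<alpha>. exp (- D) * measure \<beta> UNIV \<le> KZ \<beta> x"
      using fin_measures_AE[OF a X] by eventually_elim (use k in auto)
  qed
  then show ?thesis using fa by (simp add: mult.commute mult.left_commute)
qed


lemma orthonormal_decomp:
  fixes U :: "'h::real_inner set"
  assumes "finite U"
  shows "\<exists>E. finite E \<and> (\<forall>e\<in>E. \<forall>e'\<in>E. inner e e' = (if e = e' then 1 else 0))
           \<and> (\<forall>u\<in>U. u = (\<Sum>e\<in>E. inner u e *\<^sub>R e))"
  using assms
proof (induction U rule: finite_induct)
  case empty
  show ?case by (intro exI[of _ "{}"]) auto
next
  case (insert v U)
  then obtain E where E: "finite E" "\<forall>e\<in>E. \<forall>e'\<in>E. inner e e' = (if e = e' then 1 else 0)"
    "\<forall>u\<in>U. u = (\<Sum>e\<in>E. inner u e *\<^sub>R e)" by blast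
  define w where "w = v - (\<Sum>e\<in>E. inner v e *\<^sub>R e)"
  have wE: "inner w e = 0" if "e \<in> E" for e
  proof -
    have "inner (\<Sum>e'\<in>E. inner v e' *\<^sub>R e') e = (\<Sum>e'\<in>E. inner v e' * inner e' e)"
      by (simp add: inner_sum_left)
    also have "\<dots> = (\<Sum>e'\<in>E. if e' = e then inner v e else 0)"
      by (rule sum.cong) (use E(2) that in auto)
    also have "\<dots> = inner v e" using E(1) that by simp
    finally show ?thesis unfolding w_def by (simp add: inner_diff_left)
  qed
  show ?case
  proof (cases "w = 0")
    case True
    then have "v = (\<Sum>e\<in>E. inner v e *\<^sub>R e)" unfolding w_def by simp
    then show ?thesis using E by (intro exI[of _ E]) auto
  next
    case False
    define e0 where "e0 = w /\<^sub>R norm w"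
    have nw: "norm w > 0" using False by simp
    have e0E: "inner e0 e = 0" "inner e e0 = 0" if "e \<in> E" for e
      using wE[OF that] unfolding e0_def by (auto simp: inner_commute)
    have e00: "inner e0 e0 = 1"
      unfolding e0_def using nw by (simp add: power2_norm_eq_inner[symmetric] power2_eq_square)
    have e0n: "e0 \<notin> E" using e0E e00 by force
    define E' where "E' = insert e0 E"
    have "finite E'" using E(1) by (simp add: E'_def)
    moreover have "\<forall>e\<in>E'. \<forall>e'\<in>E'. inner e e' = (if e = e' then 1 else 0)"
      unfolding E'_def using E(2) e0E e00 by auto
    moreover have "u = (\<Sum>e\<in>E'. inner u e *\<^sub>R e)" if "u \<in> insert v U" for u
    proof -
      have sE': "(\<Sum>e\<in>E'. inner u e *\<^sub>R e) = inner u e0 *\<^sub>R e0 + (\<Sum>e\<in>E. inner u e *\<^sub>R e)"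
        unfolding E'_def using E(1) e0n by simp
      show ?thesis
      proof (cases "u \<in> U")
        case True
        have u: "u = (\<Sum>e\<in>E. inner u e *\<^sub>R e)" using E(3) True by blast
        have "inner u e0 = (\<Sum>e\<in>E. inner u e * inner e e0)"
          by (subst u) (simp add: inner_sum_left)
        also have "\<dots> = 0" using e0E by simp
        finally show ?thesis using sE' u by simp
      next
        case False
        then have uv: "u = v" using that by simp
        have "inner v e0 = inner w e0 + inner (\<Sum>e\<in>E. inner v e *\<^sub>R e) e0"
          unfolding w_def by (simp add: inner_diff_left)
        also have "inner (\<Sum>e\<in>E. inner v e *\<^sub>R e) e0 = 0"
          using e0E by (simp add: inner_sum_left)
        also have "inner w e0 = norm w"
          unfolding e0_def using nw by (simp add: power2_norm_eq_inner[symmetric] power2_eq_square)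
        finally have "inner v e0 *\<^sub>R e0 = w"
          unfolding e0_def using nw by simp
        then show ?thesis using sE' uv unfolding w_def by simp
      qed
    qed
    ultimately show ?thesis by blast
  qed
qed

lemma inner_pow_psd:
  fixes u :: "'i \<Rightarrow> 'h::real_inner"
  assumes I: "finite I"
  shows "0 \<le> (\<Sum>i\<in>I. \<Sum>j\<in>I. c i * c j * (inner (u i) (u j)) ^ k)"
proof (induction k arbitrary: c)
  case 0
  have "(\<Sum>i\<in>I. \<Sum>j\<in>I. c i * c j * (inner (u i) (u j)) ^ 0) = (\<Sum>i\<in>I. c i) * (\<Sum>j\<in>I. c j)"
    by (simp add: sum_product)
  then show ?case by simp
next
  case (Suc k)
  obtain E where E: "finite E" "\<forall>v\<in>u ` I. v = (\<Sum>e\<in>E. inner v e *\<^sub>R e)"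
    using orthonormal_decomp[of "u ` I"] I by blast
  have ip: "inner (u i) (u j) = (\<Sum>e\<in>E. inner (u i) e * inner (u j) e)" if "i \<in> I" for i j
  proof -
    have "inner (u i) (u j) = inner (\<Sum>e\<in>E. inner (u i) e *\<^sub>R e) (u j)"
      using E(2) that by (metis image_eqI)
    also have "\<dots> = (\<Sum>e\<in>E. inner (u i) e * inner e (u j))"
      by (simp add: inner_sum_left)
    also have "\<dots> = (\<Sum>e\<in>E. inner (u i) e * inner (u j) e)"
      by (simp add: inner_commute)
    finally show ?thesis .
  qed
  have "(\<Sum>i\<in>I. \<Sum>j\<in>I. c i * c j * (inner (u i) (u j)) ^ Suc k)
      = (\<Sum>i\<in>I. \<Sum>j\<in>I. \<Sum>e\<in>E. (c i * inner (u i) e) * (c j * inner (u j) e) * (inner (u i) (u j)) ^ k)"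
  proof (rule sum.cong[OF refl], rule sum.cong[OF refl])
    fix i j assume "i \<in> I" "j \<in> I"
    show "c i * c j * (inner (u i) (u j)) ^ Suc k
        = (\<Sum>e\<in>E. (c i * inner (u i) e) * (c j * inner (u j) e) * (inner (u i) (u j)) ^ k)"
    proof -
      have aux: "q = (\<Sum>e\<in>E. a e * b e) \<Longrightarrow> ci * cj * P * q = (\<Sum>e\<in>E. (ci * a e) * (cj * b e) * P)"
        for q ci cj P :: real and a b :: "'h \<Rightarrow> real"
        by (simp add: sum_distrib_left algebra_simps)
      have "c i * c j * (inner (u i) (u j)) ^ Suc k = c i * c j * (inner (u i) (u j)) ^ k * inner (u i) (u j)"
        by (simp add: algebra_simps)
      also have "\<dots> = (\<Sum>e\<in>E. (c i * inner (u i) e) * (c j * inner (u j) e) * (inner (u i) (u j)) ^ k)"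
        by (rule aux) (rule ip[OF \<open>i \<in> I\<close>])
      finally show ?thesis .
    qed
  qed
  also have "\<dots> = (\<Sum>e\<in>E. \<Sum>i\<in>I. \<Sum>j\<in>I. (c i * inner (u i) e) * (c j * inner (u j) e) * (inner (u i) (u j)) ^ k)"
    by (simp add: sum.swap[of _ E] sum.swap[of _ E I])
  also have "\<dots> \<ge> 0"
    by (rule sum_nonneg) (rule Suc.IH)
  finally show ?case by simp
qed

lemma exp_inner_psd:
  fixes u :: "'i \<Rightarrow> 'h::real_inner"
  assumes I: "finite I"
  shows "0 \<le> (\<Sum>i\<in>I. \<Sum>j\<in>I. c i * c j * exp (2 * inner (u i) (u j)))"
proof -
  have s: "(\<lambda>n. (\<Sum>i\<in>I. \<Sum>j\<in>I. c i * c j * ((2 * inner (u i) (u j)) ^ n /\<^sub>R fact n)))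
      sums (\<Sum>i\<in>I. \<Sum>j\<in>I. c i * c j * exp (2 * inner (u i) (u j)))"
    by (intro sums_sum sums_mult exp_converges)
  have t: "(\<Sum>i\<in>I. \<Sum>j\<in>I. c i * c j * ((2 * inner (u i) (u j)) ^ n /\<^sub>R fact n))
      = (2 ^ n / fact n) * (\<Sum>i\<in>I. \<Sum>j\<in>I. c i * c j * (inner (u i) (u j)) ^ n)" for n
    by (simp add: sum_distrib_left power_mult_distrib field_simps)
  have nn: "0 \<le> (\<Sum>i\<in>I. \<Sum>j\<in>I. c i * c j * ((2 * inner (u i) (u j)) ^ n /\<^sub>R fact n))" for n
    unfolding t by (intro mult_nonneg_nonneg inner_pow_psd I) auto
  show ?thesis
    using suminf_nonneg[OF sums_summable[OF s] nn] sums_unique[OF s] by simp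
qed

lemma gauss_psd:
  fixes u :: "'i \<Rightarrow> 'h::real_inner"
  assumes I: "finite I"
  shows "0 \<le> (\<Sum>i\<in>I. \<Sum>j\<in>I. c i * c j * exp (- (norm (u i - u j))\<^sup>2))"
proof -
  define d where "d i = c i * exp (- (norm (u i))\<^sup>2)" for i
  have e: "exp (- (norm (u i - u j))\<^sup>2) = exp (- (norm (u i))\<^sup>2) * exp (- (norm (u j))\<^sup>2) * exp (2 * inner (u i) (u j))" for i j
  proof -
    have "(norm (u i - u j))\<^sup>2 = (norm (u i))\<^sup>2 + (norm (u j))\<^sup>2 - 2 * inner (u i) (u j)"
      by (simp add: power2_norm_eq_inner inner_diff_left inner_diff_right inner_commute)
    then show ?thesis by (simp add: exp_add[symmetric] exp_diff)
  qed
  have "(\<Sum>i\<in>I. \<Sum>j\<in>I. c i * c j * exp (- (norm (u i - u j))\<^sup>2))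
      = (\<Sum>i\<in>I. \<Sum>j\<in>I. d i * d j * exp (2 * inner (u i) (u j)))"
    unfolding e d_def by (simp add: algebra_simps)
  also have "\<dots> \<ge> 0" by (rule exp_inner_psd[OF I])
  finally show ?thesis by simp
qed


definition is_part :: "'a::metric_space set \<Rightarrow> real \<Rightarrow> nat \<Rightarrow> (nat \<Rightarrow> 'a set) \<Rightarrow> (nat \<Rightarrow> 'a) \<Rightarrow> bool" where
  "is_part X \<delta> n A p \<longleftrightarrow>
     (\<forall>i<n. A i \<in> sets borel \<and> A i \<subseteq> X \<and> p i \<in> X \<and> (\<forall>x\<in>A i. dist x (p i) < \<delta>))
     \<and> (\<forall>x\<in>X. \<exists>i<n. x \<in> A i) \<and> (\<forall>i<n. \<forall>j<n. \<forall>x. x \<in> A i \<longrightarrow> x \<in> A j \<longrightarrow> i = j)"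

lemma partition_exists:
  fixes X :: "'a::metric_space set"
  assumes X: "compact X" and d: "\<delta> > 0"
  shows "\<exists>n A p. is_part X \<delta> n A p"
proof -
  have "X \<subseteq> (\<Union>c\<in>X. ball c \<delta>)" using d by auto
  then obtain C where C: "C \<subseteq> X" "finite C" "X \<subseteq> (\<Union>c\<in>C. ball c \<delta>)"
    using compactE_image[OF X, of X "\<lambda>c. ball c \<delta>"] by auto
  obtain ps where ps: "set ps = C" using finite_list[OF C(2)] by blast
  define n where "n = length ps"
  define p where "p i = ps ! i" for i
  define A where "A i = (X \<inter> ball (p i) \<delta>) - (\<Union>j\<in>{..<i}. ball (p j) \<delta>)" for i
  have cl: "closed X" using X by (rule compact_imp_closed)
  have "is_part X \<delta> n A p"
    unfolding is_part_def
  proof (intro conjI allI impI ballI)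
    fix i assume "i < n"
    show "A i \<in> sets borel"
      unfolding A_def using cl
      by (intro sets.Diff sets.Int borel_closed borel_open sets.finite_UN) auto
    show "A i \<subseteq> X" unfolding A_def by auto
    show "p i \<in> X" using \<open>i < n\<close> C(1) ps unfolding p_def n_def by auto
  next
    fix i x assume "i < n" "x \<in> A i"
    then show "dist x (p i) < \<delta>" unfolding A_def by (auto simp: dist_commute)
  next
    fix x assume "x \<in> X"
    then obtain c where c: "c \<in> C" "x \<in> ball c \<delta>" using C(3) by blast
    then obtain k where k: "k < n" "p k = c" using ps unfolding p_def n_def by (metis in_set_conv_nth)
    define i where "i = (LEAST i. x \<in> ball (p i) \<delta>)"
    have xi: "x \<in> ball (p i) \<delta>" unfolding i_def by (rule LeastI[of _ k]) (use c k in auto)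
    have ik: "i \<le> k" unfolding i_def by (rule Least_le) (use c k in auto)
    have "x \<notin> ball (p j) \<delta>" if "j < i" for j
      using not_less_Least[of j "\<lambda>i. x \<in> ball (p i) \<delta>"] that unfolding i_def by auto
    then have "x \<in> A i" unfolding A_def using xi \<open>x \<in> X\<close> by auto
    then show "\<exists>i<n. x \<in> A i" using ik k by (intro exI[of _ i]) auto
  next
    fix i j x assume "i < n" "j < n" "x \<in> A i" "x \<in> A j"
    then show "i = j" unfolding A_def
      by (cases i j rule: linorder_cases) auto
  qed
  then show ?thesis by blast
qed

definition Dsum :: "nat \<Rightarrow> (nat \<Rightarrow> 'a set) \<Rightarrow> (nat \<Rightarrow> 'a::metric_space) \<Rightarrow> 'a measure \<Rightarrow> 'a measure \<Rightarrow> real" where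
  "Dsum n A p \<alpha> \<beta> = (\<Sum>i<n. \<Sum>j<n. exp (- dist (p i) (p j)) * measure \<alpha> (A i) * measure \<beta> (A j))"

lemma Dsum_sym: "Dsum n A p \<alpha> \<beta> = Dsum n A p \<beta> \<alpha>"
  unfolding Dsum_def by (subst sum.swap) (simp add: dist_commute algebra_simps)

lemma indicator_sum_unique:
  fixes n i :: nat
  assumes "i < n" "x \<in> A i" "\<And>j. j < n \<Longrightarrow> x \<in> A j \<Longrightarrow> j = i"
  shows "(\<Sum>j<n. g j * indicator (A j) x) = (g i :: real)"
proof -
  have "(\<Sum>j<n. g j * indicator (A j) x) = (\<Sum>j<n. if j = i then g i else 0)"
  proof (rule sum.cong[OF refl])
    fix j assume j: "j \<in> {..<n}"
    show "g j * indicator (A j) x = (if j = i then g i else 0)"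
    proof (cases "j = i")
      case True with assms(2) show ?thesis by simp
    next
      case False
      then have "x \<notin> A j" using assms(3) j by blast
      then show ?thesis using False by simp
    qed
  qed
  also have "\<dots> = g i" using assms(1) by simp
  finally show ?thesis .
qed

lemma integrable_step:
  assumes M: "finite_measure M" and A: "\<And>j. j < n \<Longrightarrow> A j \<in> sets M"
  shows "integrable M (\<lambda>y. \<Sum>j<n. c j * indicator (A j) y :: real)"
proof (rule Bochner_Integration.integrable_sum[where f="\<lambda>j y. c j * indicator (A j) y"])
  fix j assume "j \<in> {..<n}"
  then have "A j \<in> sets M" using A by auto
  then show "integrable M (\<lambda>y. c j * indicator (A j) y :: real)"
    by (intro integrable_mult_right integrable_real_indicator)
       (use finite_measure.emeasure_finite[OF M] in \<open>auto simp: top.not_eq_extremum\<close>)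
qed

lemma integral_step:
  assumes M: "finite_measure M" and A: "\<And>j. j < n \<Longrightarrow> A j \<in> sets M"
  shows "(\<integral>y. (\<Sum>j<n. c j * indicator (A j) y) \<partial>M) = (\<Sum>j<n. c j * measure M (A j) :: real)"
proof -
  have "(\<integral>y. (\<Sum>j<n. c j * indicator (A j) y) \<partial>M) = (\<Sum>j<n. \<integral>y. c j * indicator (A j) y \<partial>M)"
  proof (rule Bochner_Integration.integral_sum[where f="\<lambda>j y. c j * indicator (A j) y"])
    fix j assume "j \<in> {..<n}"
    then have "A j \<in> sets M" using A by auto
    then show "integrable M (\<lambda>y. c j * indicator (A j) y :: real)"
      by (intro integrable_mult_right integrable_real_indicator)
         (use finite_measure.emeasure_finite[OF M] in \<open>auto simp: top.not_eq_extremum\<close>)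
  qed
  also have "\<dots> = (\<Sum>j<n. c j * measure M (A j))"
    by (rule sum.cong[OF refl]) (use A in \<open>auto simp: Int_absorb2 sets.sets_into_space\<close>)
  finally show ?thesis .
qed

lemma discretize:
  assumes P: "is_part X \<delta> n A p" and X: "closed X"
    and a: "\<alpha> \<in> fin_measures_on X" and b: "\<beta> \<in> fin_measures_on X"
  shows "\<bar>Zpair \<alpha> \<beta> - Dsum n A p \<alpha> \<beta>\<bar> \<le> 2 * \<delta> * measure \<alpha> UNIV * measure \<beta> UNIV"
proof -
  note fa = fin_measuresD[OF a] and fb = fin_measuresD[OF b]
  have PA: "\<And>i. i < n \<Longrightarrow> A i \<in> sets borel" "\<And>i. i < n \<Longrightarrow> A i \<subseteq> X"
    "\<And>i x. i < n \<Longrightarrow> x \<in> A i \<Longrightarrow> dist x (p i) < \<delta>"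
    "\<And>x. x \<in> X \<Longrightarrow> \<exists>i<n. x \<in> A i"
    "\<And>i j x. i < n \<Longrightarrow> j < n \<Longrightarrow> x \<in> A i \<Longrightarrow> x \<in> A j \<Longrightarrow> i = j"
    using P unfolding is_part_def by blast+
  define s where "s i = (\<Sum>j<n. exp (- dist (p i) (p j)) * measure \<beta> (A j))" for i
  have step1: "\<bar>KZ \<beta> x - s i\<bar> \<le> 2 * \<delta> * measure \<beta> UNIV" if "i < n" "x \<in> A i" for i x
  proof -
    have si: "s i = (\<integral>y. (\<Sum>j<n. exp (- dist (p i) (p j)) * indicator (A j) y) \<partial>\<beta>)"
      unfolding s_def by (rule integral_step[OF fb(2), symmetric]) (use PA(1) fb(1) in auto)
    have "\<bar>KZ \<beta> x - s i\<bar> \<le> 2 * \<delta> * measure \<beta> (space \<beta>)"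
      unfolding si KZ_def
    proof (rule integral_diff_bound[OF fb(2) K_int[OF fb(2,1)] integrable_step[OF fb(2)]])
      show "\<And>j. j < n \<Longrightarrow> A j \<in> sets \<beta>" using PA(1) fb(1) by auto
      show "AE y in \<beta>. \<bar>exp (- dist x y) - (\<Sum>j<n. exp (- dist (p i) (p j)) * indicator (A j) y)\<bar> \<le> 2 * \<delta>"
        using fin_measures_AE[OF b X]
      proof eventually_elim
        case (elim y)
        then obtain j where j: "j < n" "y \<in> A j" using PA(4) by blast
        have "(\<Sum>j<n. exp (- dist (p i) (p j)) * indicator (A j) y) = exp (- dist (p i) (p j))"
          by (rule indicator_sum_unique[of j n y A]; use j PA(5) in blast)
        moreover have "\<bar>exp (- dist x y) - exp (- dist (p i) (p j))\<bar> \<le> dist x (p i) + dist y (p j)"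
          by (rule K_lip)
        moreover have "dist x (p i) < \<delta>" "dist y (p j) < \<delta>" using PA(3) that j by auto
        ultimately show ?case by simp
      qed
    qed
    then show ?thesis using fb by simp
  qed
  define t where "t x = (\<Sum>i<n. s i * indicator (A i) x)" for x
  have tint: "(\<integral>x. t x \<partial>\<alpha>) = Dsum n A p \<alpha> \<beta>"
  proof -
    have "(\<integral>x. t x \<partial>\<alpha>) = (\<Sum>i<n. s i * measure \<alpha> (A i))"
      unfolding t_def by (rule integral_step[OF fa(2)]) (use PA(1) fa(1) in auto)
    also have "\<dots> = Dsum n A p \<alpha> \<beta>"
      unfolding Dsum_def s_def by (rule sum.cong[OF refl]) (simp add: sum_distrib_right mult_ac, simp add: sum_distrib_left)
    finally show ?thesis .
  qed
  have "\<bar>Zpair \<alpha> \<beta> - (\<integral>x. t x \<partial>\<alpha>)\<bar> \<le> (2 * \<delta> * measure \<beta> UNIV) * measure \<alpha> (space \<alpha>)"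
    unfolding Zpair_KZ
  proof (rule integral_diff_bound[OF fa(2) KZ_int[OF fb(2,1) fa(2,1)]])
    show "integrable \<alpha> t" unfolding t_def
      by (rule integrable_step[OF fa(2)]) (use PA(1) fa(1) in auto)
    show "AE x in \<alpha>. \<bar>KZ \<beta> x - t x\<bar> \<le> 2 * \<delta> * measure \<beta> UNIV"
      using fin_measures_AE[OF a X]
    proof eventually_elim
      case (elim x)
      then obtain i where i: "i < n" "x \<in> A i" using PA(4) by blast
      have "t x = s i" unfolding t_def
        by (rule indicator_sum_unique[of i n x A]; use i PA(5) in blast)
      then show ?case using step1[OF i] by simp
    qed
  qed
  then have "\<bar>Zpair \<alpha> \<beta> - Dsum n A p \<alpha> \<beta>\<bar> \<le> (2 * \<delta> * measure \<beta> UNIV) * measure \<alpha> UNIV"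
    by (simp only: tint fa(4))
  then show ?thesis by (simp only: mult_ac)
qed


lemma psd_X:
  fixes X :: "'a::metric_space set"
  assumes neg: "negative_type TYPE('h::{real_inner,complete_space}) X" and I: "finite I"
    and x: "\<And>i. i \<in> I \<Longrightarrow> x i \<in> X"
  shows "0 \<le> (\<Sum>i\<in>I. \<Sum>j\<in>I. b i * b j * exp (- dist (x i) (x j)))"
proof -
  obtain f :: "'a \<Rightarrow> 'h" where f: "\<forall>x\<in>X. \<forall>y\<in>X. dist (f x) (f y) = sqrt (dist x y)"
    using neg unfolding negative_type_def by blast
  have d: "dist (x i) (x j) = (norm (f (x i) - f (x j)))\<^sup>2" if "i \<in> I" "j \<in> I" for i j
  proof -
    have "norm (f (x i) - f (x j)) = sqrt (dist (x i) (x j))"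
      using f x that by (simp add: dist_norm)
    then show ?thesis by simp
  qed
  have "(\<Sum>i\<in>I. \<Sum>j\<in>I. b i * b j * exp (- dist (x i) (x j)))
      = (\<Sum>i\<in>I. \<Sum>j\<in>I. b i * b j * exp (- (norm ((f \<circ> x) i - (f \<circ> x) j))\<^sup>2))"
    by (intro sum.cong refl) (simp add: d)
  also have "\<dots> \<ge> 0" by (rule gauss_psd[OF I])
  finally show ?thesis by simp
qed

lemma Zpair_sym:
  assumes X: "compact X" and a: "\<alpha> \<in> fin_measures_on X" and b: "\<beta> \<in> fin_measures_on X"
  shows "Zpair \<alpha> \<beta> = Zpair \<beta> \<alpha>"
proof (rule ccontr)
  assume ne: "Zpair \<alpha> \<beta> \<noteq> Zpair \<beta> \<alpha>"
  define M where "M = measure \<alpha> UNIV * measure \<beta> UNIV"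
  define d where "d = \<bar>Zpair \<alpha> \<beta> - Zpair \<beta> \<alpha>\<bar>"
  define \<delta> where "\<delta> = d / (4 * M + 1)"
  have Mnn: "0 \<le> M" unfolding M_def by simp
  have dpos: "d > 0" using ne unfolding d_def by simp
  have dd: "\<delta> * (4 * M + 1) = d" unfolding \<delta>_def using Mnn by simp
  have \<delta>pos: "\<delta> > 0" unfolding \<delta>_def using dpos Mnn by simp
  obtain n A p where P: "is_part X \<delta> n A p" using partition_exists[OF X \<delta>pos] by blast
  have cl: "closed X" using X by (rule compact_imp_closed)
  have 1: "\<bar>Zpair \<alpha> \<beta> - Dsum n A p \<alpha> \<beta>\<bar> \<le> 2 * \<delta> * M"
    using discretize[OF P cl a b] unfolding M_def by (simp add: mult.assoc)
  have 2: "\<bar>Zpair \<beta> \<alpha> - Dsum n A p \<alpha> \<beta>\<bar> \<le> 2 * \<delta> * M"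
    using discretize[OF P cl b a] unfolding M_def Dsum_sym[of n A p \<beta> \<alpha>] by (simp add: mult_ac)
  have "d \<le> 4 * \<delta> * M" using 1 2 unfolding d_def by linarith
  then show False using dd \<delta>pos by (simp add: algebra_simps)
qed

lemma quad_swap:
  "(\<Sum>q\<in>J. \<Sum>r\<in>J. \<Sum>i\<in>I. \<Sum>j\<in>I. F q r i j) = (\<Sum>i\<in>I. \<Sum>j\<in>I. \<Sum>q\<in>J. \<Sum>r\<in>J. F q r i j)"
proof -
  have "(\<Sum>q\<in>J. \<Sum>r\<in>J. \<Sum>i\<in>I. \<Sum>j\<in>I. F q r i j) = (\<Sum>q\<in>J. \<Sum>i\<in>I. \<Sum>r\<in>J. \<Sum>j\<in>I. F q r i j)"
    by (rule sum.cong[OF refl]) (rule sum.swap)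
  also have "\<dots> = (\<Sum>q\<in>J. \<Sum>i\<in>I. \<Sum>j\<in>I. \<Sum>r\<in>J. F q r i j)"
    by (intro sum.cong[OF refl]) (rule sum.swap)
  also have "\<dots> = (\<Sum>i\<in>I. \<Sum>q\<in>J. \<Sum>j\<in>I. \<Sum>r\<in>J. F q r i j)"
    by (rule sum.swap)
  also have "\<dots> = (\<Sum>i\<in>I. \<Sum>j\<in>I. \<Sum>q\<in>J. \<Sum>r\<in>J. F q r i j)"
    by (rule sum.cong[OF refl]) (rule sum.swap)
  finally show ?thesis .
qed

lemma Dsum_comb:
  "(\<Sum>q\<in>J. \<Sum>r\<in>J. c q * c r * Dsum n A p (\<alpha> q) (\<alpha> r))
   = (\<Sum>i<n. \<Sum>j<n. (\<Sum>q\<in>J. c q * measure (\<alpha> q) (A i)) * (\<Sum>r\<in>J. c r * measure (\<alpha> r) (A j)) * exp (- dist (p i) (p j)))"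
proof -
  have "(\<Sum>q\<in>J. \<Sum>r\<in>J. c q * c r * Dsum n A p (\<alpha> q) (\<alpha> r))
    = (\<Sum>q\<in>J. \<Sum>r\<in>J. \<Sum>i<n. \<Sum>j<n. c q * c r * (exp (- dist (p i) (p j)) * measure (\<alpha> q) (A i) * measure (\<alpha> r) (A j)))"
    unfolding Dsum_def by (simp add: sum_distrib_left)
  also have "\<dots> = (\<Sum>i<n. \<Sum>j<n. \<Sum>q\<in>J. \<Sum>r\<in>J. c q * c r * (exp (- dist (p i) (p j)) * measure (\<alpha> q) (A i) * measure (\<alpha> r) (A j)))"
    by (rule quad_swap)
  also have "\<dots> = (\<Sum>i<n. \<Sum>j<n. (\<Sum>q\<in>J. c q * measure (\<alpha> q) (A i)) * (\<Sum>r\<in>J. c r * measure (\<alpha> r) (A j)) * exp (- dist (p i) (p j)))"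
  proof (intro sum.cong refl)
    fix i j
    have "(\<Sum>q\<in>J. c q * measure (\<alpha> q) (A i)) * (\<Sum>r\<in>J. c r * measure (\<alpha> r) (A j)) * exp (- dist (p i) (p j))
      = (\<Sum>q\<in>J. \<Sum>r\<in>J. (c q * measure (\<alpha> q) (A i)) * (c r * measure (\<alpha> r) (A j)) * exp (- dist (p i) (p j)))"
      by (simp only: sum_distrib_left sum_distrib_right) (rule sum.swap)
    also have "\<dots> = (\<Sum>q\<in>J. \<Sum>r\<in>J. c q * c r * (exp (- dist (p i) (p j)) * measure (\<alpha> q) (A i) * measure (\<alpha> r) (A j)))"
      by (intro sum.cong refl) (simp only: mult_ac)
    finally show "(\<Sum>q\<in>J. \<Sum>r\<in>J. c q * c r * (exp (- dist (p i) (p j)) * measure (\<alpha> q) (A i) * measure (\<alpha> r) (A j)))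
      = (\<Sum>q\<in>J. c q * measure (\<alpha> q) (A i)) * (\<Sum>r\<in>J. c r * measure (\<alpha> r) (A j)) * exp (- dist (p i) (p j))" by simp
  qed
  finally show ?thesis .
qed

lemma abs_aux: "\<bar>z - d\<bar> \<le> e \<Longrightarrow> k * d - \<bar>k\<bar> * e \<le> k * (z::real)"
proof -
  assume h: "\<bar>z - d\<bar> \<le> e"
  have "\<bar>k * (z - d)\<bar> \<le> \<bar>k\<bar> * e" unfolding abs_mult by (rule mult_left_mono[OF h]) simp
  then show ?thesis by (simp add: algebra_simps abs_le_iff)
qed

lemma Zpair_psd:
  fixes X :: "'a::metric_space set"
  assumes X: "compact X" and neg: "negative_type TYPE('h::{real_inner,complete_space}) X"
    and J: "finite J" and a: "\<And>q. q \<in> J \<Longrightarrow> \<alpha> q \<in> fin_measures_on X"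
  shows "0 \<le> (\<Sum>q\<in>J. \<Sum>r\<in>J. c q * c r * Zpair (\<alpha> q) (\<alpha> r))"
proof (rule ccontr)
  define S where "S = (\<Sum>q\<in>J. \<Sum>r\<in>J. c q * c r * Zpair (\<alpha> q) (\<alpha> r))"
  assume "\<not> 0 \<le> (\<Sum>q\<in>J. \<Sum>r\<in>J. c q * c r * Zpair (\<alpha> q) (\<alpha> r))"
  then have Sneg: "S < 0" unfolding S_def by simp
  define C where "C = (\<Sum>q\<in>J. \<Sum>r\<in>J. \<bar>c q\<bar> * \<bar>c r\<bar> * (measure (\<alpha> q) UNIV * measure (\<alpha> r) UNIV))"
  have Cnn: "0 \<le> C" unfolding C_def by (intro sum_nonneg) simp
  define \<delta> where "\<delta> = - S / (2 * C + 1)"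
  have dd: "\<delta> * (2 * C + 1) = - S" unfolding \<delta>_def using Cnn by simp
  have \<delta>pos: "\<delta> > 0" unfolding \<delta>_def using Sneg Cnn by (intro divide_pos_pos) auto
  obtain n A p where P: "is_part X \<delta> n A p" using partition_exists[OF X \<delta>pos] by blast
  have cl: "closed X" using X by (rule compact_imp_closed)
  have px: "p i \<in> X" if "i \<in> {..<n}" for i using P that unfolding is_part_def by auto
  define T where "T = (\<Sum>q\<in>J. \<Sum>r\<in>J. c q * c r * Dsum n A p (\<alpha> q) (\<alpha> r))"
  have Tnn: "0 \<le> T" unfolding T_def Dsum_comb
    by (rule psd_X[OF neg]) (use px in auto)
  have "(\<Sum>q\<in>J. \<Sum>r\<in>J. c q * c r * Dsum n A p (\<alpha> q) (\<alpha> r) - \<bar>c q * c r\<bar> * (2 * \<delta> * measure (\<alpha> q) UNIV * measure (\<alpha> r) UNIV)) \<le> S"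
    unfolding S_def
  proof (intro sum_mono)
    fix q r assume "q \<in> J" "r \<in> J"
    then show "c q * c r * Dsum n A p (\<alpha> q) (\<alpha> r) - \<bar>c q * c r\<bar> * (2 * \<delta> * measure (\<alpha> q) UNIV * measure (\<alpha> r) UNIV)
        \<le> c q * c r * Zpair (\<alpha> q) (\<alpha> r)"
      by (intro abs_aux discretize[OF P cl]) (use a in auto)
  qed
  also have "(\<Sum>q\<in>J. \<Sum>r\<in>J. c q * c r * Dsum n A p (\<alpha> q) (\<alpha> r) - \<bar>c q * c r\<bar> * (2 * \<delta> * measure (\<alpha> q) UNIV * measure (\<alpha> r) UNIV))
      = T - 2 * \<delta> * C"
    unfolding T_def C_def by (simp add: sum_subtractf sum_distrib_left abs_mult mult_ac)
  finally have "T - 2 * \<delta> * C \<le> S" .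
  then show False using Tnn dd \<delta>pos by (simp add: algebra_simps)
qed


lemma integral_msum:
  fixes M :: "'i \<Rightarrow> 'a::metric_space measure" and g :: "'a \<Rightarrow> real"
  assumes I: "finite I" and r: "\<And>i. i \<in> I \<Longrightarrow> 0 \<le> r i"
    and M: "\<And>i. i \<in> I \<Longrightarrow> finite_measure (M i)" "\<And>i. i \<in> I \<Longrightarrow> sets (M i) = sets borel"
    and g: "g \<in> borel_measurable borel" "\<And>x. 0 \<le> g x" "\<And>x. g x \<le> B"
  shows "integral\<^sup>L (msum I r M) g = (\<Sum>i\<in>I. r i * integral\<^sup>L (M i) g)"
proof -
  have gi: "integrable (M i) g" if "i \<in> I" for i
    by (rule integrable_bdd[OF M(1)[OF that] M(2)[OF that] g(1), where B=B])
       (use g(2,3) in \<open>auto simp: abs_le_iff intro: order_trans[OF _ g(2)]\<close>)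
  have nn: "(\<integral>\<^sup>+x. ennreal (g x) \<partial>M i) = ennreal (integral\<^sup>L (M i) g)" if "i \<in> I" for i
    by (rule nn_integral_eq_integral[OF gi[OF that]]) (use g(2) in auto)
  have inn: "0 \<le> integral\<^sup>L (M i) g" for i by (rule integral_nonneg_AE) (use g(2) in auto)
  have "integral\<^sup>L (msum I r M) g = enn2real (\<integral>\<^sup>+x. ennreal (g x) \<partial>msum I r M)"
    by (rule integral_eq_nn_integral) (use g in \<open>auto simp: meas_borelI\<close>)
  also have "(\<integral>\<^sup>+x. ennreal (g x) \<partial>msum I r M) = (\<Sum>i\<in>I. ennreal (r i) * (\<integral>\<^sup>+x. ennreal (g x) \<partial>M i))"
    by (rule nn_integral_msum) (use M(2) g(1) in auto)
  also have "\<dots> = (\<Sum>i\<in>I. ennreal (r i * integral\<^sup>L (M i) g))"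
    by (rule sum.cong[OF refl]) (simp add: nn r inn ennreal_mult)
  also have "\<dots> = ennreal (\<Sum>i\<in>I. r i * integral\<^sup>L (M i) g)"
    by (rule sum_ennreal) (simp add: r inn)
  also have "enn2real \<dots> = (\<Sum>i\<in>I. r i * integral\<^sup>L (M i) g)"
    by (rule enn2real_ennreal) (auto intro!: sum_nonneg simp: r inn)
  finally show ?thesis .
qed

lemma msum_fin:
  fixes M :: "'i \<Rightarrow> 'a::metric_space measure"
  assumes I: "finite I" and r: "\<And>i. i \<in> I \<Longrightarrow> 0 \<le> r i"
    and M: "\<And>i. i \<in> I \<Longrightarrow> M i \<in> fin_measures_on X" and X: "closed X"
  shows "msum I r M \<in> fin_measures_on X"
    and "emeasure (msum I r M) UNIV = (\<Sum>i\<in>I. ennreal (r i) * emeasure (M i) UNIV)"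
proof -
  have sb: "\<And>i. i \<in> I \<Longrightarrow> sets (M i) = sets borel" using M fin_measuresD by blast
  show eU: "emeasure (msum I r M) UNIV = (\<Sum>i\<in>I. ennreal (r i) * emeasure (M i) UNIV)"
    by (rule emeasure_msum[OF sb]) auto
  have "(\<Sum>i\<in>I. ennreal (r i) * emeasure (M i) UNIV) = (\<Sum>i\<in>I. ennreal (r i * measure (M i) UNIV))"
    by (rule sum.cong[OF refl])
       (use fin_measuresD(2)[OF M] r in \<open>simp add: finite_measure.emeasure_eq_measure ennreal_mult\<close>)
  also have "\<dots> = ennreal (\<Sum>i\<in>I. r i * measure (M i) UNIV)"
    by (rule sum_ennreal) (simp add: r)
  finally have "emeasure (msum I r M) UNIV \<noteq> \<infinity>" unfolding eU by simp
  then have "finite_measure (msum I r M)" by (intro finite_measureI) simp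
  moreover have "emeasure (msum I r M) (UNIV - X) = 0"
    using X fin_measuresD(3)[OF M] by (subst emeasure_msum[OF sb]) auto
  ultimately show "msum I r M \<in> fin_measures_on X"
    unfolding fin_measures_on_def by simp
qed

lemma KZ_msum:
  fixes M :: "'i \<Rightarrow> 'a::metric_space measure"
  assumes I: "finite I" and r: "\<And>i. i \<in> I \<Longrightarrow> 0 \<le> r i"
    and M: "\<And>i. i \<in> I \<Longrightarrow> finite_measure (M i)" "\<And>i. i \<in> I \<Longrightarrow> sets (M i) = sets borel"
  shows "KZ (msum I r M) y = (\<Sum>i\<in>I. r i * KZ (M i) y)"
  unfolding KZ_def by (rule integral_msum[OF I r M, where B=1]) auto

lemma Zpair_msum:
  fixes M :: "'i \<Rightarrow> 'a::metric_space measure"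
  assumes I: "finite I" and r: "\<And>i. i \<in> I \<Longrightarrow> 0 \<le> r i"
    and M: "\<And>i. i \<in> I \<Longrightarrow> M i \<in> fin_measures_on X" and X: "closed X"
  shows "Zpair (msum I r M) (msum I r M) = (\<Sum>i\<in>I. \<Sum>j\<in>I. r i * r j * Zpair (M i) (M j))"
proof -
  define N where "N = msum I r M"
  have Mf: "\<And>i. i \<in> I \<Longrightarrow> finite_measure (M i)" "\<And>i. i \<in> I \<Longrightarrow> sets (M i) = sets borel"
    using M fin_measuresD by blast+
  have Nf: "finite_measure N" "sets N = sets borel" unfolding N_def
    using fin_measuresD[OF msum_fin(1)[OF I r M X]] by auto
  have "Zpair N N = (\<Sum>i\<in>I. r i * integral\<^sup>L (M i) (KZ N))"
    unfolding Zpair_KZ N_def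
    by (rule integral_msum[OF I r Mf, where B="measure N UNIV"])
       (use KZ_nonneg[OF Nf] KZ_le[OF Nf] KZ_meas[OF Nf] in \<open>auto simp: N_def\<close>)
  also have "\<dots> = (\<Sum>i\<in>I. r i * (\<Sum>j\<in>I. r j * Zpair (M i) (M j)))"
  proof (rule sum.cong[OF refl])
    fix i assume i: "i \<in> I"
    have "integral\<^sup>L (M i) (KZ N) = (\<integral>y. (\<Sum>j\<in>I. r j * KZ (M j) y) \<partial>M i)"
      unfolding N_def by (rule Bochner_Integration.integral_cong[OF refl]) (rule KZ_msum[OF I r Mf])
    also have "\<dots> = (\<Sum>j\<in>I. \<integral>y. r j * KZ (M j) y \<partial>M i)"
      by (rule Bochner_Integration.integral_sum)
         (use KZ_int[OF Mf(1) Mf(2) Mf(1)[OF i] Mf(2)[OF i]] in auto)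
    also have "\<dots> = (\<Sum>j\<in>I. r j * Zpair (M i) (M j))"
      unfolding Zpair_KZ by simp
    finally show "r i * integral\<^sup>L (M i) (KZ N) = r i * (\<Sum>j\<in>I. r j * Zpair (M i) (M j))" by simp
  qed
  also have "\<dots> = (\<Sum>i\<in>I. \<Sum>j\<in>I. r i * r j * Zpair (M i) (M j))"
    by (simp add: sum_distrib_left mult_ac)
  finally show ?thesis unfolding N_def .
qed

lemma return_prob:
  assumes "x \<in> Y" "closed Y"
  shows "return borel x \<in> prob_measures_on Y"
proof -
  have "prob_space (return borel x)" by (rule prob_space_return) simp
  then have "finite_measure (return borel x)" by (rule prob_space.finite_measure)
  then show ?thesis using assms
    unfolding prob_measures_on_def fin_measures_on_def by auto
qed

lemma KZ_return: "KZ (return borel x) y = exp (- dist y x)"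
  unfolding KZ_def by (rule integral_return) auto

lemma Zpair_return_left:
  assumes "finite_measure \<nu>" "sets \<nu> = sets borel"
  shows "Zpair (return borel x) \<nu> = KZ \<nu> x"
  unfolding Zpair_KZ by (rule integral_return) (use KZ_meas[OF assms] in auto)

lemma Zpair_return_right:
  assumes "finite_measure \<nu>" "sets \<nu> = sets borel"
  shows "Zpair \<nu> (return borel x) = KZ \<nu> x"
  unfolding Zpair_KZ KZ_return unfolding KZ_def by (simp add: dist_commute)

lemma prob_measuresD:
  assumes "\<mu> \<in> prob_measures_on Y"
  shows "\<mu> \<in> fin_measures_on Y" "measure \<mu> UNIV = 1" "emeasure \<mu> UNIV = 1"
  using assms unfolding prob_measures_on_def by (auto simp: measure_def)

lemma fin_measures_mono:
  assumes "\<mu> \<in> fin_measures_on Y" "Y \<subseteq> Z" "closed Y" "closed Z"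
  shows "\<mu> \<in> fin_measures_on Z"
proof -
  note f = fin_measuresD[OF assms(1)]
  have "emeasure \<mu> (UNIV - Z) \<le> emeasure \<mu> (UNIV - Y)"
    by (rule emeasure_mono) (use assms f in auto)
  then show ?thesis using f assms(1) unfolding fin_measures_on_def by auto
qed

lemma prob_measures_mono:
  assumes "\<mu> \<in> prob_measures_on Y" "Y \<subseteq> Z" "closed Y" "closed Z"
  shows "\<mu> \<in> prob_measures_on Z"
  using fin_measures_mono[OF prob_measuresD(1)[OF assms(1)] assms(2-)] assms(1)
  unfolding prob_measures_on_def by auto

lemma Zpos:
  assumes X: "compact X" and \<nu>: "\<nu> \<in> prob_measures_on X"
  shows "0 < Zpair \<nu> \<nu>"
proof -
  have b: "bounded X" using X by (rule compact_imp_bounded)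
  have "exp (- diameter X) * measure \<nu> UNIV * measure \<nu> UNIV \<le> Zpair \<nu> \<nu>"
    by (rule Zpair_lower[OF prob_measuresD(1)[OF \<nu>] prob_measuresD(1)[OF \<nu>] compact_imp_closed[OF X]])
       (rule diameter_bounded_bound[OF b])
  then have "exp (- diameter X) \<le> Zpair \<nu> \<nu>" using prob_measuresD(2)[OF \<nu>] by simp
  then show ?thesis by (rule less_le_trans[OF exp_gt_zero])
qed


lemma dm_facts:
  assumes X: "compact X" and dm: "diversity_maximizing X \<mu>"
  shows "\<mu> \<in> prob_measures_on X" "0 < Zpair \<mu> \<mu>" "max_diversity X = ereal (1 / Zpair \<mu> \<mu>)"
    and "\<And>\<nu>. \<nu> \<in> prob_measures_on X \<Longrightarrow> Zpair \<mu> \<mu> \<le> Zpair \<nu> \<nu>"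
proof -
  show mu: "\<mu> \<in> prob_measures_on X" and md: "max_diversity X = ereal (1 / Zpair \<mu> \<mu>)"
    using dm unfolding diversity_maximizing_def by auto
  show cpos: "0 < Zpair \<mu> \<mu>" by (rule Zpos[OF X mu])
  fix \<nu> assume \<nu>: "\<nu> \<in> prob_measures_on X"
  have npos: "0 < Zpair \<nu> \<nu>" by (rule Zpos[OF X \<nu>])
  have "ereal (1 / Zpair \<nu> \<nu>) \<le> max_diversity X"
    unfolding max_diversity_def by (rule Sup_upper) (use \<nu> in blast)
  then have "1 / Zpair \<nu> \<nu> \<le> 1 / Zpair \<mu> \<mu>" unfolding md by simp
  then show "Zpair \<mu> \<mu> \<le> Zpair \<nu> \<nu>" using cpos npos by (simp add: field_simps)
qed

lemma KZ_ge:
  assumes X: "compact X" and dm: "diversity_maximizing X \<mu>" and x: "x \<in> X"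
  shows "Zpair \<mu> \<mu> \<le> KZ \<mu> x"
proof (rule ccontr)
  define c where "c = Zpair \<mu> \<mu>"
  define a where "a = KZ \<mu> x"
  assume "\<not> Zpair \<mu> \<mu> \<le> KZ \<mu> x"
  then have ac: "a < c" unfolding a_def c_def by simp
  note mu = dm_facts(1)[OF X dm]
  note fm = fin_measuresD[OF prob_measuresD(1)[OF mu]]
  have cl: "closed X" using X by (rule compact_imp_closed)
  have cpos: "0 < c" unfolding c_def by (rule dm_facts(2)[OF X dm])
  have anng: "0 \<le> a" unfolding a_def by (rule KZ_nonneg[OF fm(2,1)])
  define t where "t = (c - a) / (c + 1)"
  have tc: "t * (c + 1) = c - a" unfolding t_def using cpos by simp
  have t0: "0 < t" unfolding t_def using ac cpos by simp
  have t1: "t < 1" unfolding t_def using ac cpos anng by simp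
  define r where "r b = (if b then t else 1 - t)" for b
  define M where "M b = (if b then return borel x else \<mu>)" for b
  have r0: "\<And>b. b \<in> UNIV \<Longrightarrow> 0 \<le> r b" unfolding r_def using t0 t1 by auto
  have Mx: "\<And>b. b \<in> UNIV \<Longrightarrow> M b \<in> fin_measures_on X"
    unfolding M_def using prob_measuresD(1)[OF return_prob[OF x cl]] prob_measuresD(1)[OF mu] by auto
  note rx = fin_measuresD[OF prob_measuresD(1)[OF return_prob[OF x cl]]]
  define \<nu> where "\<nu> = msum UNIV r M"
  have "emeasure \<nu> UNIV = (\<Sum>b\<in>UNIV. ennreal (r b) * emeasure (M b) UNIV)"
    unfolding \<nu>_def by (rule msum_fin(2)[OF _ r0 Mx cl]) simp
  also have "\<dots> = ennreal t + ennreal (1 - t)"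
    using prob_measuresD(3)[OF return_prob[OF x cl]] prob_measuresD(3)[OF mu]
    by (simp add: UNIV_bool r_def M_def)
  also have "\<dots> = 1" using t0 t1 by (subst ennreal_plus[symmetric]) auto
  finally have "emeasure \<nu> UNIV = 1" .
  moreover have "\<nu> \<in> fin_measures_on X" unfolding \<nu>_def by (rule msum_fin(1)[OF _ r0 Mx cl]) simp
  ultimately have nup: "\<nu> \<in> prob_measures_on X"
    unfolding prob_measures_on_def by simp
  have "Zpair \<nu> \<nu> = (\<Sum>i\<in>UNIV. \<Sum>j\<in>UNIV. r i * r j * Zpair (M i) (M j))"
    unfolding \<nu>_def by (rule Zpair_msum[OF _ r0 Mx cl]) simp
  also have "\<dots> = t * t * Zpair (return borel x) (return borel x) + t * (1 - t) * Zpair (return borel x) \<mu>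
     + (1 - t) * t * Zpair \<mu> (return borel x) + (1 - t) * (1 - t) * c"
    by (simp add: UNIV_bool r_def M_def c_def)
  also have "Zpair (return borel x) (return borel x) = 1"
    by (subst Zpair_return_left[OF rx(2,1)]) (simp add: KZ_return)
  also have "Zpair (return borel x) \<mu> = a"
    unfolding a_def by (rule Zpair_return_left[OF fm(2,1)])
  also have "Zpair \<mu> (return borel x) = a"
    unfolding a_def by (rule Zpair_return_right[OF fm(2,1)])
  finally have zn: "Zpair \<nu> \<nu> = t * t * 1 + t * (1 - t) * a + (1 - t) * t * a + (1 - t) * (1 - t) * c" .
  have "c \<le> Zpair \<nu> \<nu>" unfolding c_def by (rule dm_facts(4)[OF X dm nup])
  then have le: "0 \<le> t * t * 1 + t * (1 - t) * a + (1 - t) * t * a + (1 - t) * (1 - t) * c - c" using zn by simp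
  have "t * t * 1 + t * (1 - t) * a + (1 - t) * t * a + (1 - t) * (1 - t) * c - c
      = t * t * (c - 2 * a + 1) - 2 * t * (c - a)" by (simp add: algebra_simps)
  also have "\<dots> = t * t * (c - 2 * a + 1) - 2 * t * (t * (c + 1))" by (simp only: tc)
  also have "\<dots> = - (t * t) * (c + 2 * a + 1)" by (simp add: algebra_simps)
  finally have "0 \<le> - (t * t) * (c + 2 * a + 1)" using le by simp
  moreover have "0 < (t * t) * (c + 2 * a + 1)" using t0 cpos anng by simp
  ultimately show False by simp
qed

lemma support_facts:
  fixes \<mu> :: "'a::metric_space measure"
  assumes X: "compact X" and mu: "\<mu> \<in> fin_measures_on X"
  shows "closed (support \<mu>)" "support \<mu> \<subseteq> X" "emeasure \<mu> (UNIV - support \<mu>) = 0"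
proof -
  define S where "S = support \<mu>"
  note fm = fin_measuresD[OF mu]
  have cl: "closed X" using X by (rule compact_imp_closed)
  have nS: "\<exists>U. open U \<and> x \<in> U \<and> emeasure \<mu> U = 0" if "x \<notin> S" for x
    using that unfolding S_def support_def by (auto simp: not_less)
  have opn: "open (- S)"
    unfolding open_subopen[of "- S"]
  proof
    fix x assume "x \<in> - S"
    then obtain U where U: "open U" "x \<in> U" "emeasure \<mu> U = 0" using nS by blast
    have "U \<subseteq> - S" using U unfolding S_def support_def by auto
    then show "\<exists>T. open T \<and> x \<in> T \<and> T \<subseteq> - S" using U by blast
  qed
  then show clS: "closed (support \<mu>)" unfolding S_def[symmetric] by (simp add: closed_def)
  show sub: "support \<mu> \<subseteq> X"
  proof
    fix x assume xS: "x \<in> support \<mu>"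
    show "x \<in> X"
    proof (rule ccontr)
      assume "x \<notin> X"
      then have "emeasure \<mu> (- X) > 0" using xS cl unfolding support_def by (auto simp: open_Compl)
      moreover have "emeasure \<mu> (- X) = 0" using fm(3) by (simp add: Compl_eq_Diff_UNIV)
      ultimately show False by simp
    qed
  qed
  define C where "C k = X - (\<Union>s\<in>S. ball s (inverse (real (Suc k))))" for k
  have Cnull: "C k \<in> null_sets \<mu>" for k
  proof -
    define B where "B = (\<Union>s\<in>S. ball s (inverse (real (Suc k))))"
    have "open B" unfolding B_def by (intro open_UN) auto
    then have "closed (- B)" by (rule closed_Compl)
    moreover have Ceq: "C k = X \<inter> - B" unfolding C_def B_def by blast
    ultimately have Ccomp: "compact (C k)" using compact_Int_closed[OF X] by (simp only: Ceq)
    have CS: "x \<notin> S" if "x \<in> C k" for x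
    proof
      assume "x \<in> S"
      moreover have "x \<in> ball x (inverse (real (Suc k)))" by simp
      ultimately have "x \<in> B" unfolding B_def by blast
      then show False using that Ceq by blast
    qed
    let ?T = "{U. open U \<and> emeasure \<mu> U = 0}"
    have Csub: "C k \<subseteq> \<Union>?T"
    proof
      fix x assume "x \<in> C k"
      then have "x \<notin> S" by (rule CS)
      then obtain U where "open U" "x \<in> U" "emeasure \<mu> U = 0" using nS by blast
      then show "x \<in> \<Union>?T" by blast
    qed
    have "\<And>B. B \<in> ?T \<Longrightarrow> open B" by blast
    then obtain T' where T': "T' \<subseteq> ?T" "finite T'" "C k \<subseteq> \<Union>T'"
      by (rule compactE[OF Ccomp Csub])
    have Un: "(\<Union>U\<in>T'. U) \<in> null_sets \<mu>"
    proof (rule null_sets_UN')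
      show "countable T'" using T'(2) by (rule countable_finite)
      fix U assume "U \<in> T'"
      then have "open U" "emeasure \<mu> U = 0" using T'(1) by auto
      moreover then have "U \<in> sets \<mu>" using fm(1) by simp
      ultimately show "U \<in> null_sets \<mu>" by (simp add: null_sets_def)
    qed
    have "C k \<in> sets \<mu>"
      using Ccomp by (simp only: fm(1)) (rule borel_compact)
    moreover have "C k \<subseteq> (\<Union>U\<in>T'. U)" using T'(3) by simp
    ultimately show ?thesis using Un null_sets_subset by blast
  qed
  have XS: "X - S \<subseteq> (\<Union>k. C k)"
  proof
    fix x assume x: "x \<in> X - S"
    then obtain e where e: "e > 0" "ball x e \<subseteq> - S" using opn open_contains_ball by blast
    obtain n where n: "n > 0" "inverse (real n) < e" using ex_inverse_of_nat_less[OF e(1)] by auto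
    have "x \<notin> ball s (inverse (real (Suc (n - 1))))" if "s \<in> S" for s
    proof -
      have "s \<notin> ball x e" using e that by auto
      then have "dist x s \<ge> e" by simp
      then show ?thesis using n by (simp add: dist_commute)
    qed
    then have "x \<in> C (n - 1)" unfolding C_def using x by auto
    then show "x \<in> (\<Union>k. C k)" by blast
  qed
  have "(UNIV - X) \<union> (\<Union>k. C k) \<in> null_sets \<mu>"
  proof (rule null_sets.Un)
    show "UNIV - X \<in> null_sets \<mu>" using fm cl by (auto simp: null_sets_def)
    show "(\<Union>k. C k) \<in> null_sets \<mu>" using Cnull by auto
  qed
  moreover have "UNIV - S \<in> sets \<mu>" using fm(1) opn by (simp add: Compl_eq_Diff_UNIV[symmetric])
  moreover have "UNIV - S \<subseteq> (UNIV - X) \<union> (\<Union>k. C k)" using XS by blast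
  ultimately have "UNIV - S \<in> null_sets \<mu>" by (rule null_sets_subset)
  then show "emeasure \<mu> (UNIV - support \<mu>) = 0" unfolding S_def by (rule null_setsD1)
qed


lemma KZ_on_support:
  assumes X: "compact X" and dm: "diversity_maximizing X \<mu>" and x: "x \<in> support \<mu>"
  shows "KZ \<mu> x = Zpair \<mu> \<mu>"
proof (rule ccontr)
  define c where "c = Zpair \<mu> \<mu>"
  assume ne: "KZ \<mu> x \<noteq> Zpair \<mu> \<mu>"
  note mu = dm_facts(1)[OF X dm]
  note fm = fin_measuresD[OF prob_measuresD(1)[OF mu]]
  have cl: "closed X" using X by (rule compact_imp_closed)
  have xX: "x \<in> X" using support_facts(2)[OF X prob_measuresD(1)[OF mu]] x by blast
  have gt: "c < KZ \<mu> x" using KZ_ge[OF X dm xX] ne unfolding c_def by simp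
  have aeX: "AE y in \<mu>. y \<in> X" by (rule fin_measures_AE[OF prob_measuresD(1)[OF mu] cl])
  have int: "integrable \<mu> (\<lambda>y. KZ \<mu> y - c)"
    by (rule Bochner_Integration.integrable_diff[OF KZ_int[OF fm(2,1) fm(2,1)] finite_measure.integrable_const[OF fm(2)]])
  have "(\<integral>y. KZ \<mu> y - c \<partial>\<mu>) = (\<integral>y. KZ \<mu> y \<partial>\<mu>) - (\<integral>y. c \<partial>\<mu>)"
    by (rule Bochner_Integration.integral_diff[OF KZ_int[OF fm(2,1) fm(2,1)] finite_measure.integrable_const[OF fm(2)]])
  also have "\<dots> = c - c * measure \<mu> UNIV"
    using fm(4) by (simp add: c_def Zpair_KZ)
  also have "\<dots> = 0" using prob_measuresD(2)[OF mu] by simp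
  finally have "(\<integral>y. KZ \<mu> y - c \<partial>\<mu>) = 0" .
  moreover have "AE y in \<mu>. 0 \<le> KZ \<mu> y - c"
    using aeX by eventually_elim (use KZ_ge[OF X dm] in \<open>auto simp: c_def\<close>)
  ultimately have ae: "AE y in \<mu>. KZ \<mu> y - c = 0"
    using integral_nonneg_eq_0_iff_AE[OF int] by simp
  define U where "U = {y. c < KZ \<mu> y}"
  have oU: "open U" unfolding U_def
    by (rule open_Collect_less) (auto intro: KZ_cont[OF fm(2,1)])
  have "emeasure \<mu> U > 0" using x oU gt unfolding support_def U_def by auto
  moreover have "emeasure \<mu> U = 0"
  proof -
    have "AE y in \<mu>. y \<notin> U" using ae by eventually_elim (auto simp: U_def)
    moreover have "U \<in> sets \<mu>" using fm(1) oU by simp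
    ultimately show ?thesis using AE_iff_measurable[of U \<mu> "\<lambda>y. y \<notin> U"] fm(4) by auto
  qed
  ultimately show False by simp
qed

lemma Winner_bound:
  fixes X :: "'a::metric_space set"
  assumes X: "compact X" and neg: "negative_type TYPE('h::{real_inner,complete_space}) X"
    and dm: "diversity_maximizing X \<mu>"
    and m1: "fst m \<in> fin_measures_on (support \<mu>)" and m2: "snd m \<in> fin_measures_on (support \<mu>)"
    and tm: "total_mass m = 1"
  shows "Zpair \<mu> \<mu> \<le> Winner m m"
proof -
  define c where "c = Zpair \<mu> \<mu>"
  define S where "S = support \<mu>"
  note mu = dm_facts(1)[OF X dm]
  note fm = fin_measuresD[OF prob_measuresD(1)[OF mu]]
  have cl: "closed X" using X by (rule compact_imp_closed)
  note sf = support_facts[OF X prob_measuresD(1)[OF mu]]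
  have cS: "closed S" unfolding S_def by (rule sf(1))
  have SX: "S \<subseteq> X" unfolding S_def by (rule sf(2))
  have cross: "Zpair \<beta> \<mu> = c * measure \<beta> UNIV" "Zpair \<mu> \<beta> = c * measure \<beta> UNIV"
    if b: "\<beta> \<in> fin_measures_on S" for \<beta>
  proof -
    note fb = fin_measuresD[OF b]
    have "Zpair \<beta> \<mu> = (\<integral>y. c \<partial>\<beta>)"
      unfolding Zpair_KZ
    proof (rule integral_cong_AE)
      show "KZ \<mu> \<in> borel_measurable \<beta>" using KZ_meas[OF fm(2,1)] fb(1) by (simp add: meas_borelI)
      show "(\<lambda>y. c) \<in> borel_measurable \<beta>" by simp
      show "AE y in \<beta>. KZ \<mu> y = c"
        using fin_measures_AE[OF b cS]
        by eventually_elim (use KZ_on_support[OF X dm] in \<open>auto simp: S_def c_def\<close>)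
    qed
    also have "\<dots> = c * measure \<beta> UNIV" using fb(4) by simp
    finally show 1: "Zpair \<beta> \<mu> = c * measure \<beta> UNIV" .
    have "\<beta> \<in> fin_measures_on X" by (rule fin_measures_mono[OF b SX cS cl])
    then have "Zpair \<mu> \<beta> = Zpair \<beta> \<mu>"
      by (rule Zpair_sym[OF X prob_measuresD(1)[OF mu]])
    then show "Zpair \<mu> \<beta> = c * measure \<beta> UNIV" using 1 by simp
  qed
  define \<alpha> where "\<alpha> q = (if q = (0::nat) then fst m else if q = 1 then snd m else \<mu>)" for q
  define w where "w q = (if q = (0::nat) then 1 else (-1::real))" for q
  have \<alpha>X: "\<alpha> q \<in> fin_measures_on X" if "q \<in> {0,1,2}" for q
    using that fin_measures_mono[OF m1 sf(2) sf(1) cl] fin_measures_mono[OF m2 sf(2) sf(1) cl]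
      prob_measuresD(1)[OF mu] unfolding \<alpha>_def by auto
  have "0 \<le> (\<Sum>q\<in>{0,1,2}. \<Sum>r\<in>{0,1,2}. w q * w r * Zpair (\<alpha> q) (\<alpha> r))"
    by (rule Zpair_psd[OF X neg]) (use \<alpha>X in auto)
  also have "(\<Sum>q\<in>{0,1,2}. \<Sum>r\<in>{0,1,2}. w q * w r * Zpair (\<alpha> q) (\<alpha> r))
     = Winner m m - Zpair (fst m) \<mu> - Zpair \<mu> (fst m) + Zpair (snd m) \<mu> + Zpair \<mu> (snd m) + c"
    by (simp add: \<alpha>_def w_def Winner_def c_def)
  also have "\<dots> = Winner m m - 2 * c * (measure (fst m) UNIV - measure (snd m) UNIV) + c"
    using cross[OF m1[folded S_def]] cross[OF m2[folded S_def]] by (simp add: algebra_simps)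
  also have "measure (fst m) UNIV - measure (snd m) UNIV = 1"
    using tm unfolding total_mass_def .
  finally show ?thesis unfolding c_def by simp
qed

lemma part2:
  fixes X :: "'a::metric_space set"
  assumes X: "compact X" and neg: "negative_type TYPE('h::{real_inner,complete_space}) X"
    and dm: "diversity_maximizing X \<mu>"
  shows "closed (support \<mu>) \<and> support \<mu> \<subseteq> X \<and> positively_weighted (support \<mu>)
           \<and> magnitude (support \<mu>) = max_diversity X"
proof -
  define c where "c = Zpair \<mu> \<mu>"
  define S where "S = support \<mu>"
  note mu = dm_facts(1)[OF X dm]
  note fm = fin_measuresD[OF prob_measuresD(1)[OF mu]]
  have cpos: "0 < c" unfolding c_def by (rule dm_facts(2)[OF X dm])
  note sf = support_facts[OF X prob_measuresD(1)[OF mu]]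
  have muS: "\<mu> \<in> prob_measures_on S"
    using mu sf(3) fm unfolding prob_measures_on_def fin_measures_on_def S_def by auto
  have nS: "null_measure borel \<in> fin_measures_on S"
    unfolding fin_measures_on_def by (auto intro: finite_measureI)
  have KZnull: "KZ (null_measure borel) x = 0" for x unfolding KZ_def by simp
  have mag: "magnitude S = ereal (1 / c)"
    unfolding magnitude_def
  proof (rule antisym)
    show "Sup {ereal (1 / Winner m m) |m. fst m \<in> fin_measures_on S \<and> snd m \<in> fin_measures_on S \<and> total_mass m = 1}
        \<le> ereal (1 / c)"
    proof (rule Sup_least)
      fix y assume "y \<in> {ereal (1 / Winner m m) |m. fst m \<in> fin_measures_on S \<and> snd m \<in> fin_measures_on S \<and> total_mass m = 1}"
      then obtain m where m: "y = ereal (1 / Winner m m)" "fst m \<in> fin_measures_on S"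
        "snd m \<in> fin_measures_on S" "total_mass m = 1" by blast
      have "c \<le> Winner m m" unfolding c_def
        by (rule Winner_bound[OF X neg dm]) (use m in \<open>auto simp: S_def\<close>)
      then have "1 / Winner m m \<le> 1 / c" using cpos by (intro divide_left_mono) auto
      then show "y \<le> ereal (1 / c)" using m(1) by simp
    qed
    show "ereal (1 / c) \<le> Sup {ereal (1 / Winner m m) |m. fst m \<in> fin_measures_on S \<and> snd m \<in> fin_measures_on S \<and> total_mass m = 1}"
    proof (rule Sup_upper)
      have "Winner (\<mu>, null_measure borel) (\<mu>, null_measure borel) = c"
        unfolding Winner_def c_def by (simp add: Zpair_KZ KZnull)
      moreover have "total_mass (\<mu>, null_measure borel) = 1"
        unfolding total_mass_def using prob_measuresD(2)[OF mu] by simp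
      ultimately show "ereal (1 / c) \<in> {ereal (1 / Winner m m) |m. fst m \<in> fin_measures_on S \<and> snd m \<in> fin_measures_on S \<and> total_mass m = 1}"
        using prob_measuresD(1)[OF muS] nS by (intro CollectI exI[of _ "(\<mu>, null_measure borel)"]) auto
    qed
  qed
  have "positively_weighted S"
    unfolding positively_weighted_def using muS mag unfolding c_def by blast
  moreover have "magnitude S = max_diversity X"
    using mag dm_facts(3)[OF X dm] unfolding c_def by simp
  ultimately show ?thesis using sf unfolding S_def by blast
qed


lemma measure_support_set:
  assumes \<nu>: "\<nu> \<in> fin_measures_on F" and F: "closed F"
  shows "measure \<nu> F = measure \<nu> UNIV"
proof -
  note f = fin_measuresD[OF \<nu>]
  have "UNIV - F \<in> null_sets \<nu>" using f F by (auto simp: null_sets_def)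
  moreover have "F \<in> sets \<nu>" using f F by simp
  ultimately have "measure \<nu> (F \<union> (UNIV - F)) = measure \<nu> F" by (intro measure_Un_null_set)
  then show ?thesis by simp
qed

lemma integral_fin_supp:
  fixes g :: "'a::metric_space \<Rightarrow> real"
  assumes F: "finite F" and \<nu>: "\<nu> \<in> fin_measures_on F"
    and g: "g \<in> borel_measurable borel" "\<And>x. \<bar>g x\<bar> \<le> B"
  shows "integral\<^sup>L \<nu> g = (\<Sum>x\<in>F. g x * measure \<nu> {x})"
proof -
  note f = fin_measuresD[OF \<nu>]
  have cF: "closed F" using F by (rule finite_imp_closed)
  have "integral\<^sup>L \<nu> g = (\<integral>y. (\<Sum>x\<in>F. g x * indicator {x} y) \<partial>\<nu>)"
  proof (rule integral_cong_AE)
    show "g \<in> borel_measurable \<nu>" using g(1) f(1) by (simp add: meas_borelI)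
    show "(\<lambda>y. \<Sum>x\<in>F. g x * indicator {x} y) \<in> borel_measurable \<nu>"
      using f(1) by (simp add: meas_borelI)
    show "AE y in \<nu>. g y = (\<Sum>x\<in>F. g x * indicator {x} y)"
      using fin_measures_AE[OF \<nu> cF]
    proof eventually_elim
      case (elim y)
      have "(\<Sum>x\<in>F. g x * indicator {x} y) = (\<Sum>x\<in>F. if x = y then g y else 0)"
        by (rule sum.cong) (auto simp: indicator_def)
      also have "\<dots> = g y" using elim F by simp
      finally show ?case by simp
    qed
  qed
  also have "\<dots> = (\<Sum>x\<in>F. \<integral>y. g x * indicator {x} y \<partial>\<nu>)"
  proof (rule Bochner_Integration.integral_sum[where f="\<lambda>x y. g x * indicator {x} y"])
    fix x assume "x \<in> F"
    show "integrable \<nu> (\<lambda>y. g x * indicator {x} y :: real)"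
      by (intro integrable_mult_right integrable_real_indicator)
         (use f finite_measure.emeasure_finite[OF f(2)] in \<open>auto simp: top.not_eq_extremum\<close>)
  qed
  also have "\<dots> = (\<Sum>x\<in>F. g x * measure \<nu> {x})" using f(4) by simp
  finally show ?thesis .
qed

definition Qf :: "'a::metric_space set \<Rightarrow> ('a \<Rightarrow> real) \<Rightarrow> real" where
  "Qf F w = (\<Sum>x\<in>F. \<Sum>y\<in>F. w x * w y * exp (- dist x y))"

lemma Zpair_fin_supp:
  assumes F: "finite F" and \<nu>: "\<nu> \<in> fin_measures_on F"
  shows "Zpair \<nu> \<nu> = Qf F (\<lambda>x. measure \<nu> {x})"
proof -
  note f = fin_measuresD[OF \<nu>]
  have k: "KZ \<nu> x = (\<Sum>y\<in>F. exp (- dist x y) * measure \<nu> {y})" for x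
    unfolding KZ_def by (rule integral_fin_supp[OF F \<nu>, where B=1]) auto
  have "Zpair \<nu> \<nu> = (\<Sum>x\<in>F. KZ \<nu> x * measure \<nu> {x})"
    unfolding Zpair_KZ
    by (rule integral_fin_supp[OF F \<nu>, where B="measure \<nu> UNIV"])
       (use KZ_meas[OF f(2,1)] KZ_nonneg[OF f(2,1)] KZ_le[OF f(2,1)] in auto)
  also have "\<dots> = Qf F (\<lambda>x. measure \<nu> {x})"
    unfolding Qf_def k by (simp only: sum_distrib_right) (intro sum.cong refl, simp only: mult_ac)
  finally show ?thesis .
qed

definition Wset :: "'a set \<Rightarrow> ('a \<Rightarrow> real) set" where
  "Wset F = {w. (\<forall>x. w x \<in> (if x \<in> F then {0..1} else {0})) \<and> sum w F = 1}"

lemma Wset_compact: "compact (Wset F)"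
proof -
  define T where "T x = (if x \<in> F then {0..1::real} else {0})" for x
  have "compactin (product_topology (\<lambda>_. euclidean) UNIV) (PiE UNIV T)"
    by (subst compactin_PiE) (auto simp: T_def)
  then have c1: "compact (PiE UNIV T)"
    by (simp add: euclidean_product_topology)
  have "continuous_on UNIV (\<lambda>w::'a \<Rightarrow> real. \<Sum>x\<in>F. w x)"
    by (intro continuous_on_sum) simp
  then have c2: "closed {w::'a \<Rightarrow> real. (\<Sum>x\<in>F. w x) = 1}"
    by (intro closed_Collect_eq) auto
  have e1: "PiE UNIV T = {w. \<forall>x. w x \<in> T x}" by (auto simp: PiE_UNIV_domain Pi_iff)
  have "Wset F = PiE UNIV T \<inter> {w. (\<Sum>x\<in>F. w x) = 1}"
    unfolding e1 Wset_def T_def by blast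
  then show ?thesis using compact_Int_closed[OF c1 c2] by simp
qed

lemma Qf_cont: "continuous_on A (Qf F)"
  unfolding Qf_def
  by (intro continuous_on_sum continuous_on_mult continuous_on_const)
     (auto intro: continuous_on_subset[OF continuous_on_product_coordinates])

lemma finite_maximizer:
  fixes F :: "'a::metric_space set"
  assumes F: "finite F" "F \<noteq> {}"
  shows "\<exists>\<mu>. diversity_maximizing F \<mu>"
proof -
  have cF: "closed F" using F(1) by (rule finite_imp_closed)
  have cpF: "compact F" using F(1) by (rule finite_imp_compact)
  obtain x0 where x0: "x0 \<in> F" using F(2) by blast
  have "indicator {x0} \<in> Wset F"
    unfolding Wset_def using x0 F(1) by (auto simp: indicator_def)
  then have Wne: "Wset F \<noteq> {}" by blast
  obtain w where w: "w \<in> Wset F" and wmin: "\<And>v. v \<in> Wset F \<Longrightarrow> Qf F w \<le> Qf F v"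
    using continuous_attains_inf[OF Wset_compact Wne Qf_cont] by blast
  have w01: "0 \<le> w x" "w x \<le> 1" if "x \<in> F" for x using w that unfolding Wset_def by (auto split: if_splits)
  have w1: "sum w F = 1" using w unfolding Wset_def by auto
  define M where "M x = return borel (x::'a)" for x
  have Mx: "\<And>x. x \<in> F \<Longrightarrow> M x \<in> fin_measures_on F"
    unfolding M_def using return_prob[OF _ cF] prob_measuresD(1) by blast
  define \<mu> where "\<mu> = msum F w M"
  have "emeasure \<mu> UNIV = (\<Sum>x\<in>F. ennreal (w x) * emeasure (M x) UNIV)"
    unfolding \<mu>_def by (rule msum_fin(2)[OF F(1) w01(1) Mx cF])
  also have "\<dots> = (\<Sum>x\<in>F. ennreal (w x))"
    by (rule sum.cong[OF refl]) (simp add: M_def)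
  also have "\<dots> = 1" using w01 w1 by simp
  finally have "emeasure \<mu> UNIV = 1" .
  moreover have "\<mu> \<in> fin_measures_on F" unfolding \<mu>_def by (rule msum_fin(1)[OF F(1) w01(1) Mx cF])
  ultimately have mup: "\<mu> \<in> prob_measures_on F" unfolding prob_measures_on_def by simp
  have "Zpair \<mu> \<mu> = (\<Sum>x\<in>F. \<Sum>y\<in>F. w x * w y * Zpair (M x) (M y))"
    unfolding \<mu>_def by (rule Zpair_msum[OF F(1) w01(1) Mx cF])
  also have "\<dots> = Qf F w"
    unfolding Qf_def M_def
  proof (intro sum.cong refl)
    fix x y assume "x \<in> F" "y \<in> F"
    have "Zpair (return borel x) (return borel y) = exp (- dist x y)"
      using fin_measuresD[OF prob_measuresD(1)[OF return_prob[OF \<open>y \<in> F\<close> cF]]]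
      by (simp add: Zpair_return_left KZ_return dist_commute)
    then show "w x * w y * Zpair (return borel x) (return borel y) = w x * w y * exp (- dist x y)" by simp
  qed
  finally have Zmu: "Zpair \<mu> \<mu> = Qf F w" .
  have Zmupos: "0 < Zpair \<mu> \<mu>" by (rule Zpos[OF cpF mup])
  have "max_diversity F = ereal (1 / Zpair \<mu> \<mu>)"
    unfolding max_diversity_def
  proof (rule antisym)
    show "Sup {ereal (1 / Zpair \<mu> \<mu>) |\<mu>. \<mu> \<in> prob_measures_on F} \<le> ereal (1 / Zpair \<mu> \<mu>)"
    proof (rule Sup_least)
      fix z assume "z \<in> {ereal (1 / Zpair \<mu> \<mu>) |\<mu>. \<mu> \<in> prob_measures_on F}"
      then obtain \<nu> where \<nu>: "z = ereal (1 / Zpair \<nu> \<nu>)" "\<nu> \<in> prob_measures_on F" by blast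
      note fn = fin_measuresD[OF prob_measuresD(1)[OF \<nu>(2)]]
      define v where "v x = (if x \<in> F then measure \<nu> {x} else 0)" for x
      have "v \<in> Wset F"
        unfolding Wset_def
      proof (intro CollectI conjI allI)
        fix x
        have "measure \<nu> {x} \<le> measure \<nu> UNIV"
          by (rule finite_measure.finite_measure_mono[OF fn(2)]) (use fn in auto)
        then show "v x \<in> (if x \<in> F then {0..1} else {0})"
          using prob_measuresD(2)[OF \<nu>(2)] unfolding v_def by auto
      next
        have "sum v F = (\<Sum>x\<in>F. measure \<nu> {x})" unfolding v_def by simp
        also have "\<dots> = measure \<nu> F"
          by (rule measure_eq_sum_singleton[symmetric, OF F(1)])
             (use fn finite_measure.emeasure_finite[OF fn(2)] in auto)
        also have "\<dots> = 1"
          using measure_support_set[OF prob_measuresD(1)[OF \<nu>(2)] cF] prob_measuresD(2)[OF \<nu>(2)] by simp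
        finally show "sum v F = 1" .
      qed
      then have "Qf F w \<le> Qf F v" by (rule wmin)
      also have "Qf F v = Zpair \<nu> \<nu>"
        unfolding Zpair_fin_supp[OF F(1) prob_measuresD(1)[OF \<nu>(2)]] Qf_def v_def
        by (intro sum.cong refl) auto
      finally have "Zpair \<mu> \<mu> \<le> Zpair \<nu> \<nu>" unfolding Zmu .
      then have "1 / Zpair \<nu> \<nu> \<le> 1 / Zpair \<mu> \<mu>" using Zmupos by (intro divide_left_mono) auto
      then show "z \<le> ereal (1 / Zpair \<mu> \<mu>)" using \<nu>(1) by simp
    qed
    show "ereal (1 / Zpair \<mu> \<mu>) \<le> Sup {ereal (1 / Zpair \<mu> \<mu>) |\<mu>. \<mu> \<in> prob_measures_on F}"
      by (rule Sup_upper) (use mup in blast)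
  qed
  then have "diversity_maximizing F \<mu>" unfolding diversity_maximizing_def using mup by simp
  then show ?thesis by blast
qed


lemma negative_type_mono: "negative_type T X \<Longrightarrow> Y \<subseteq> X \<Longrightarrow> negative_type T Y"
  unfolding negative_type_def by blast

lemma ereal_limit_aux:
  fixes c :: real and R :: ereal
  assumes c: "c > 0" and h: "\<And>\<delta>. \<delta> > 0 \<Longrightarrow> ereal (1 / (c + 2 * \<delta>)) \<le> R"
  shows "ereal (1 / c) \<le> R"
proof (cases R)
  case (real r)
  show ?thesis
  proof (rule ccontr)
    assume "\<not> ereal (1 / c) \<le> R"
    then have rc: "r < 1 / c" using real by simp
    have "1 / (c + 2) \<le> r" using h[of 1] real by simp
    moreover have "0 < 1 / (c + 2)" using c by simp
    ultimately have r0: "0 < r" by linarith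
    have rc1: "r * c < 1" using rc c by (simp add: less_divide_eq)
    define \<delta> where "\<delta> = (1 / r - c) / 4"
    have "c < 1 / r" using rc1 r0 by (simp add: less_divide_eq mult.commute)
    then have d0: "\<delta> > 0" unfolding \<delta>_def by simp
    have "r * (c + 2 * \<delta>) = (r * c + 1) / 2" unfolding \<delta>_def using r0 by (simp add: field_simps)
    then have "r * (c + 2 * \<delta>) < 1" using rc1 by simp
    moreover have "0 < c + 2 * \<delta>" using c d0 by simp
    ultimately have "r < 1 / (c + 2 * \<delta>)" by (simp add: less_divide_eq)
    moreover have "1 / (c + 2 * \<delta>) \<le> r" using h[OF d0] real by simp
    ultimately show False by simp
  qed
next
  case PInf then show ?thesis by simp
next
  case MInf then show ?thesis using h[of 1] by simp
qed

lemma approx_step: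
  fixes X :: "'a::metric_space set"
  assumes X: "compact X" and neg: "negative_type TYPE('h::{real_inner,complete_space}) X"
    and mu: "\<mu> \<in> prob_measures_on X" and \<delta>: "\<delta> > 0"
  shows "ereal (1 / (Zpair \<mu> \<mu> + 2 * \<delta>)) \<le> Sup {magnitude Y | Y. closed Y \<and> Y \<subseteq> X \<and> positively_weighted Y}"
proof -
  note fm = fin_measuresD[OF prob_measuresD(1)[OF mu]]
  have cl: "closed X" using X by (rule compact_imp_closed)
  obtain n A p where P: "is_part X \<delta> n A p" using partition_exists[OF X \<delta>] by blast
  have PA: "\<And>i. i < n \<Longrightarrow> A i \<in> sets borel" "\<And>i. i < n \<Longrightarrow> A i \<subseteq> X" "\<And>i. i < n \<Longrightarrow> p i \<in> X"
    "\<And>x. x \<in> X \<Longrightarrow> \<exists>i<n. x \<in> A i"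
    "\<And>i j x. i < n \<Longrightarrow> j < n \<Longrightarrow> x \<in> A i \<Longrightarrow> x \<in> A j \<Longrightarrow> i = j"
    using P unfolding is_part_def by blast+
  define F where "F = p ` {..<n}"
  have Ffin: "finite F" unfolding F_def by simp
  have FX: "F \<subseteq> X" unfolding F_def using PA(3) by auto
  have cF: "closed F" using Ffin by (rule finite_imp_closed)
  have cpF: "compact F" using Ffin by (rule finite_imp_compact)
  have Xne: "X \<noteq> {}"
  proof
    assume "X = {}"
    then have "emeasure \<mu> UNIV = 0" using fm(3) by simp
    then show False using prob_measuresD(3)[OF mu] by simp
  qed
  then obtain x0 where "x0 \<in> X" by blast
  then obtain i0 where "i0 < n" using PA(4) by blast
  then have Fne: "F \<noteq> {}" unfolding F_def by auto
  define w where "w i = measure \<mu> (A i)" for i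
  define M where "M i = return borel (p i)" for i
  have Mx: "\<And>i. i \<in> {..<n} \<Longrightarrow> M i \<in> fin_measures_on F"
    unfolding M_def F_def using return_prob[OF _ cF] prob_measuresD(1) F_def by (metis imageI)
  have w0: "\<And>i. i \<in> {..<n} \<Longrightarrow> 0 \<le> w i" unfolding w_def by simp
  define \<nu> where "\<nu> = msum {..<n} w M"
  have UA: "(\<Union>i\<in>{..<n}. A i) = X" using PA(2,4) by blast
  have "(\<Sum>i<n. w i) = measure \<mu> (\<Union>i\<in>{..<n}. A i)"
    unfolding w_def
  proof (rule measure_finite_Union[symmetric])
    show "A ` {..<n} \<subseteq> sets \<mu>" using PA(1) fm(1) by auto
    show "disjoint_family_on A {..<n}" unfolding disjoint_family_on_def using PA(5) by blast
    show "\<And>i. i \<in> {..<n} \<Longrightarrow> emeasure \<mu> (A i) \<noteq> \<infinity>"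
      using finite_measure.emeasure_finite[OF fm(2)] by auto
  qed simp
  also have "\<dots> = 1" unfolding UA
    using measure_support_set[OF prob_measuresD(1)[OF mu] cl] prob_measuresD(2)[OF mu] by simp
  finally have wsum: "(\<Sum>i<n. w i) = 1" .
  have "emeasure \<nu> UNIV = (\<Sum>i\<in>{..<n}. ennreal (w i) * emeasure (M i) UNIV)"
    unfolding \<nu>_def by (rule msum_fin(2)[OF _ w0 Mx cF]) simp
  also have "\<dots> = (\<Sum>i\<in>{..<n}. ennreal (w i))"
    by (rule sum.cong[OF refl]) (simp add: M_def)
  also have "\<dots> = 1" by (subst sum_ennreal) (use w0 wsum in auto)
  finally have "emeasure \<nu> UNIV = 1" .
  moreover have "\<nu> \<in> fin_measures_on F" unfolding \<nu>_def by (rule msum_fin(1)[OF _ w0 Mx cF]) simp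
  ultimately have nup: "\<nu> \<in> prob_measures_on F" unfolding prob_measures_on_def by simp
  have "Zpair \<nu> \<nu> = (\<Sum>i\<in>{..<n}. \<Sum>j\<in>{..<n}. w i * w j * Zpair (M i) (M j))"
    unfolding \<nu>_def by (rule Zpair_msum[OF _ w0 Mx cF]) simp
  also have "\<dots> = Dsum n A p \<mu> \<mu>"
    unfolding Dsum_def M_def w_def
  proof (intro sum.cong refl)
    fix i j
    have "Zpair (return borel (p i)) (return borel (p j)) = exp (- dist (p i) (p j))"
      using fin_measuresD[OF prob_measuresD(1)[OF return_prob[of "p j" UNIV]]]
      by (simp add: Zpair_return_left KZ_return dist_commute)
    then show "measure \<mu> (A i) * measure \<mu> (A j) * Zpair (return borel (p i)) (return borel (p j))
      = exp (- dist (p i) (p j)) * measure \<mu> (A i) * measure \<mu> (A j)" by simp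
  qed
  finally have Zn: "Zpair \<nu> \<nu> = Dsum n A p \<mu> \<mu>" .
  have "\<bar>Zpair \<mu> \<mu> - Dsum n A p \<mu> \<mu>\<bar> \<le> 2 * \<delta> * measure \<mu> UNIV * measure \<mu> UNIV"
    by (rule discretize[OF P cl prob_measuresD(1)[OF mu] prob_measuresD(1)[OF mu]])
  then have Zle: "Zpair \<nu> \<nu> \<le> Zpair \<mu> \<mu> + 2 * \<delta>" using Zn prob_measuresD(2)[OF mu] by simp
  have Znpos: "0 < Zpair \<nu> \<nu>" by (rule Zpos[OF cpF nup])
  have "1 / (Zpair \<mu> \<mu> + 2 * \<delta>) \<le> 1 / Zpair \<nu> \<nu>"
    using Zle Znpos by (intro divide_left_mono) auto
  then have s1: "ereal (1 / (Zpair \<mu> \<mu> + 2 * \<delta>)) \<le> ereal (1 / Zpair \<nu> \<nu>)" by simp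
  obtain \<mu>F where dmF: "diversity_maximizing F \<mu>F" using finite_maximizer[OF Ffin Fne] by blast
  have negF: "negative_type TYPE('h) F" by (rule negative_type_mono[OF neg FX])
  note p2 = part2[OF cpF negF dmF]
  have "ereal (1 / Zpair \<nu> \<nu>) \<le> max_diversity F"
    unfolding max_diversity_def by (rule Sup_upper) (use nup in blast)
  also have "\<dots> = magnitude (support \<mu>F)" using p2 by simp
  also have "\<dots> \<le> Sup {magnitude Y | Y. closed Y \<and> Y \<subseteq> X \<and> positively_weighted Y}"
    by (rule Sup_upper) (use p2 FX in blast)
  finally show ?thesis using s1 by (rule order_trans[rotated])
qed

theorem theorem2p5:
  fixes X :: "'a::metric_space set"
  assumes "compact X"
    and "negative_type TYPE('h::{real_inner,complete_space}) X"
  shows "max_diversity X = Sup {magnitude Y | Y. closed Y \<and> Y \<subseteq> X \<and> positively_weighted Y}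
         \<and> (\<forall>\<mu>. diversity_maximizing X \<mu> \<longrightarrow>
           closed (support \<mu>) \<and> support \<mu> \<subseteq> X \<and> positively_weighted (support \<mu>)
           \<and> magnitude (support \<mu>) = max_diversity X)"
proof (rule conjI)
  show "\<forall>\<mu>. diversity_maximizing X \<mu> \<longrightarrow>
           closed (support \<mu>) \<and> support \<mu> \<subseteq> X \<and> positively_weighted (support \<mu>)
           \<and> magnitude (support \<mu>) = max_diversity X"
    using part2[OF assms] by blast
next
  have cl: "closed X" using assms(1) by (rule compact_imp_closed)
  show "max_diversity X = Sup {magnitude Y | Y. closed Y \<and> Y \<subseteq> X \<and> positively_weighted Y}"
  proof (rule antisym)
    show "max_diversity X \<le> Sup {magnitude Y | Y. closed Y \<and> Y \<subseteq> X \<and> positively_weighted Y}"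
      unfolding max_diversity_def
    proof (rule Sup_least)
      fix z assume "z \<in> {ereal (1 / Zpair \<mu> \<mu>) |\<mu>. \<mu> \<in> prob_measures_on X}"
      then obtain \<mu> where z: "z = ereal (1 / Zpair \<mu> \<mu>)" and mu: "\<mu> \<in> prob_measures_on X" by blast
      have "ereal (1 / Zpair \<mu> \<mu>) \<le> Sup {magnitude Y | Y. closed Y \<and> Y \<subseteq> X \<and> positively_weighted Y}"
        by (rule ereal_limit_aux[OF Zpos[OF assms(1) mu]]) (rule approx_step[OF assms mu])
      then show "z \<le> Sup {magnitude Y | Y. closed Y \<and> Y \<subseteq> X \<and> positively_weighted Y}" using z by simp
    qed
    show "Sup {magnitude Y | Y. closed Y \<and> Y \<subseteq> X \<and> positively_weighted Y} \<le> max_diversity X"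
    proof (rule Sup_least)
      fix z assume "z \<in> {magnitude Y | Y. closed Y \<and> Y \<subseteq> X \<and> positively_weighted Y}"
      then obtain Y where z: "z = magnitude Y" and Y: "closed Y" "Y \<subseteq> X" "positively_weighted Y" by blast
      obtain \<mu> where mu: "\<mu> \<in> prob_measures_on Y" and mag: "magnitude Y = ereal (1 / Zpair \<mu> \<mu>)"
        using Y(3) unfolding positively_weighted_def by blast
      have "\<mu> \<in> prob_measures_on X" by (rule prob_measures_mono[OF mu Y(2) Y(1) cl])
      then have "ereal (1 / Zpair \<mu> \<mu>) \<le> max_diversity X"
        unfolding max_diversity_def by (intro Sup_upper) blast
      then show "z \<le> max_diversity X" using z mag by simp
    qed
  qed
qed


end
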